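(* Let $\mathcal{H}_1,\dots,\mathcal{H}_n$ be separable complex Hilbert spaces of arbitrary (finite or infinite) dimension, let $t\in\mathbb{R}$, and let $N_H$ be a positive integer. For $i=1,\dots,N_H$ and $j=1,\dots,n$ let $A_i^{(j)}\in\mathcal{B}(\mathcal{H}_j)$ be bounded self-adjoint operators, and put $T_i=A_i^{(1)}\otimes A_i^{(2)}\otimes\cdots\otimes A_i^{(n)}$ and ${\bf H}=\sum_{i=1}^{N_H}T_i$. Let $U=\exp[-it{\bf H}]$. Assume that $[T_k,T_l]=0$ for every pair $k,l$, and that for each $i$ at most one element of the set $\{A_i^{(1)},\dots,A_i^{(n)}\}$ does not belong to $\mathbb{R}I$. Then, up to a multiplicative complex scalar of modulus one, $$U=U^{(1)}\otimes U^{(2)}\otimes\cdots\otimes U^{(n)},\qquad U^{(j)}=\prod_{k=1}^{N_H}\exp[-it\,\delta(A_k^{(j)})A_k^{(j)}],$$ where, writing $A_k^{(m)}=\lambda_k^{(m)}I$ ($\lambda_k^{(m)}\in\mathbb{R}$) whenever $A_k^{(m)}\in\mathbb{R}I$, one sets $\delta(A_k^{(j)})=\prod_{m\ne j}\lambda_k^{(m)}$ if $A_k^{(j)}\notin\mathbb{R}I$, and $\delta(A_k^{(j)})=0$ if $A_k^{(j)}\in\mathbb{R}I$.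
   Context: $\mathbb{R}I$ denotes the set of real multiples of the identity operator; $[X,Y]=XY-YX$; $\exp$ denotes the operator exponential. Each $U^{(j)}$ is a unitary operator on $\mathcal{H}_j$. *)

theory Defs
  imports "HOL-Analysis.Analysis"
begin

text \<open>Concrete model: a separable complex Hilbert space of dimension card D
  (D a subset of nat) is modelled as l2(D); the Hilbert tensor product of
  l2(D_0),...,l2(D_(n-1)) is modelled as l2 of the set of index tuples.
  Operators are functions on coefficient functions; only their behaviour on
  the relevant l2 set matters.\<close>

definition l2 :: "'i set \<Rightarrow> ('i \<Rightarrow> complex) set" where
  "l2 S = {f. (\<forall>x. x \<notin> S \<longrightarrow> f x = 0) \<and> (\<lambda>x. (cmod (f x))^2) summable_on UNIV}"

definition l2_inner :: "('i \<Rightarrow> complex) \<Rightarrow> ('i \<Rightarrow> complex) \<Rightarrow> complex" where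
  "l2_inner f g = infsum (\<lambda>x. cnj (f x) * g x) UNIV"

definition l2_norm :: "('i \<Rightarrow> complex) \<Rightarrow> real" where
  "l2_norm f = sqrt (infsum (\<lambda>x. (cmod (f x))^2) UNIV)"

definition bounded_op :: "'i set \<Rightarrow> (('i \<Rightarrow> complex) \<Rightarrow> ('i \<Rightarrow> complex)) \<Rightarrow> bool" where
  "bounded_op S A \<longleftrightarrow>
     (\<forall>f\<in>l2 S. A f \<in> l2 S) \<and>
     (\<forall>f\<in>l2 S. \<forall>g\<in>l2 S. \<forall>a b. A (\<lambda>x. a * f x + b * g x) = (\<lambda>x. a * A f x + b * A g x)) \<and>
     (\<exists>C. \<forall>f\<in>l2 S. l2_norm (A f) \<le> C * l2_norm f)"

definition self_adjoint_op :: "'i set \<Rightarrow> (('i \<Rightarrow> complex) \<Rightarrow> ('i \<Rightarrow> complex)) \<Rightarrow> bool" where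
  "self_adjoint_op S A \<longleftrightarrow> bounded_op S A \<and>
     (\<forall>f\<in>l2 S. \<forall>g\<in>l2 S. l2_inner (A f) g = l2_inner f (A g))"

definition scalar_op :: "'i set \<Rightarrow> (('i \<Rightarrow> complex) \<Rightarrow> ('i \<Rightarrow> complex)) \<Rightarrow> real \<Rightarrow> bool" where
  "scalar_op S A lam \<longleftrightarrow> (\<forall>f\<in>l2 S. A f = (\<lambda>x. complex_of_real lam * f x))"

definition real_scalar_op :: "'i set \<Rightarrow> (('i \<Rightarrow> complex) \<Rightarrow> ('i \<Rightarrow> complex)) \<Rightarrow> bool" where
  "real_scalar_op S A \<longleftrightarrow> (\<exists>lam. scalar_op S A lam)"

definition scal :: "'i set \<Rightarrow> (('i \<Rightarrow> complex) \<Rightarrow> ('i \<Rightarrow> complex)) \<Rightarrow> real" where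
  "scal S A = (SOME lam. scalar_op S A lam)"

text \<open>delta(A_k^(j)) for the k-th term (Ak = the family j \<mapsto> A_k^(j)).\<close>
definition delta :: "nat \<Rightarrow> (nat \<Rightarrow> nat set) \<Rightarrow> (nat \<Rightarrow> (nat \<Rightarrow> complex) \<Rightarrow> (nat \<Rightarrow> complex)) \<Rightarrow> nat \<Rightarrow> real" where
  "delta n D Ak j = (if real_scalar_op (D j) (Ak j) then 0
                     else (\<Prod>m\<in>{..<n} - {j}. scal (D m) (Ak m)))"

definition basis :: "'i \<Rightarrow> ('i \<Rightarrow> complex)" where
  "basis y = (\<lambda>z. if z = y then 1 else 0)"

definition tuples :: "nat \<Rightarrow> (nat \<Rightarrow> nat set) \<Rightarrow> (nat \<Rightarrow> nat) set" where
  "tuples n D = {y. (\<forall>j<n. y j \<in> D j) \<and> (\<forall>j\<ge>n. y j = 0)}"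

text \<open>Tensor product B_0 \<otimes> ... \<otimes> B_(n-1) of bounded operators, given by its
  matrix entries  <e_x, (\<otimes>B) e_y> = \<Prod>j. <e_(x j), B_j e_(y j)>.\<close>
definition tensor_op :: "nat \<Rightarrow> (nat \<Rightarrow> nat set) \<Rightarrow> (nat \<Rightarrow> (nat \<Rightarrow> complex) \<Rightarrow> (nat \<Rightarrow> complex))
     \<Rightarrow> ((nat \<Rightarrow> nat) \<Rightarrow> complex) \<Rightarrow> ((nat \<Rightarrow> nat) \<Rightarrow> complex)" where
  "tensor_op n D B \<psi> = (\<lambda>x. if x \<in> tuples n D
      then infsum (\<lambda>y. (\<Prod>j<n. B j (basis (y j)) (x j)) * \<psi> y) (tuples n D)
      else 0)"

definition op_exp :: "(('i \<Rightarrow> complex) \<Rightarrow> ('i \<Rightarrow> complex)) \<Rightarrow> ('i \<Rightarrow> complex) \<Rightarrow> ('i \<Rightarrow> complex)" where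
  "op_exp X \<psi> = (\<lambda>x. (\<Sum>k. (X ^^ k) \<psi> x / of_nat (fact k)))"

definition U_factor :: "nat \<Rightarrow> (nat \<Rightarrow> nat set) \<Rightarrow> real \<Rightarrow> nat
     \<Rightarrow> (nat \<Rightarrow> nat \<Rightarrow> (nat \<Rightarrow> complex) \<Rightarrow> (nat \<Rightarrow> complex)) \<Rightarrow> nat
     \<Rightarrow> (nat \<Rightarrow> complex) \<Rightarrow> (nat \<Rightarrow> complex)" where
  "U_factor n D t NH A j = foldr (\<circ>)
     (map (\<lambda>k. op_exp (\<lambda>\<phi> x. - \<i> * complex_of_real t * complex_of_real (delta n D (A k) j) * A k j \<phi> x))
          [0..<NH]) id"

end

theory Submission
  imports Defs
begin

lemma sq_le_2: "(cmod (a + b))^2 \<le> 2 * (cmod a)^2 + 2 * (cmod b)^2"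
proof -
  have "cmod (a+b) \<le> cmod a + cmod b" by (rule norm_triangle_ineq)
  hence "(cmod (a+b))^2 \<le> (cmod a + cmod b)^2" by (simp add: power_mono)
  also have "\<dots> \<le> 2 * (cmod a)^2 + 2 * (cmod b)^2"
    using zero_le_power2[of "cmod a - cmod b"] unfolding power2_eq_square by (simp add: algebra_simps)
  finally show ?thesis .
qed

lemma sq_summable_add:
  assumes "(\<lambda>x. (cmod (f x))^2) summable_on A" "(\<lambda>x. (cmod (g x))^2) summable_on A"
  shows "(\<lambda>x. (cmod (f x + g x))^2) summable_on A"
proof (rule summable_on_comparison_test)
  show "(\<lambda>x. 2 * (cmod (f x))^2 + 2 * (cmod (g x))^2) summable_on A"
    by (intro summable_on_add summable_on_cmult_right assms)
qed (auto intro: sq_le_2)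

lemma sq_summable_scale:
  assumes "(\<lambda>x. (cmod (f x))^2) summable_on A"
  shows "(\<lambda>x. (cmod (c * f x))^2) summable_on A"
  using summable_on_cmult_right[OF assms, of "(cmod c)^2"] by (simp add: norm_mult power_mult_distrib)

lemma prod_summable:
  assumes "(\<lambda>x. (cmod (f x))^2) summable_on A" "(\<lambda>x. (cmod (g x))^2) summable_on A"
  shows "(\<lambda>x. cnj (f x) * g x) summable_on A"
proof -
  have "(\<lambda>x. norm (cnj (f x) * g x)) summable_on A"
  proof (rule summable_on_comparison_test)
    show "(\<lambda>x. (cmod (f x))^2 + (cmod (g x))^2) summable_on A"
      using summable_on_add[OF assms] by simp
    fix x
    have "2 * (cmod (f x) * cmod (g x)) \<le> (cmod (f x))^2 + (cmod (g x))^2"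
      using zero_le_power2[of "cmod (f x) - cmod (g x)"] unfolding power2_eq_square by (simp add: algebra_simps)
    moreover have "norm (cnj (f x) * g x) = cmod (f x) * cmod (g x)" by (simp add: norm_mult)
    moreover have "0 \<le> cmod (f x) * cmod (g x)" by simp
    ultimately show "norm (cnj (f x) * g x) \<le> (cmod (f x))^2 + (cmod (g x))^2"
      by linarith
  qed simp
  thus ?thesis by (simp add: abs_summable_summable)
qed

typedef 'i ell2 = "{f :: 'i \<Rightarrow> complex. (\<lambda>x. (cmod (f x))^2) summable_on UNIV}"
  morphisms vf Abs_ell2
  by (rule exI[of _ "\<lambda>_. 0"]) simp

setup_lifting type_definition_ell2

lemma vf_summable: "(\<lambda>x. (cmod (vf v x))^2) summable_on A"
  using vf[of v] summable_on_subset_banach by blast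

instantiation ell2 :: (type) real_vector
begin
lift_definition zero_ell2 :: "'a ell2" is "\<lambda>_. 0" by simp
lift_definition plus_ell2 :: "'a ell2 \<Rightarrow> 'a ell2 \<Rightarrow> 'a ell2" is "\<lambda>f g x. f x + g x"
  by (simp add: sq_summable_add)
lift_definition uminus_ell2 :: "'a ell2 \<Rightarrow> 'a ell2" is "\<lambda>f x. - f x" by simp
lift_definition minus_ell2 :: "'a ell2 \<Rightarrow> 'a ell2 \<Rightarrow> 'a ell2" is "\<lambda>f g x. f x - g x"
  using sq_summable_add[of f UNIV "\<lambda>x. - g x" for f g] by simp
lift_definition scaleR_ell2 :: "real \<Rightarrow> 'a ell2 \<Rightarrow> 'a ell2" is "\<lambda>r f x. complex_of_real r * f x"
  by (simp add: sq_summable_scale)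
instance
proof
  fix x y z :: "'a ell2" and r s :: real
  show "x + y + z = x + (y + z)" by transfer (simp add: add.assoc)
  show "x + y = y + x" by transfer (simp add: add.commute)
  show "0 + x = x" by transfer simp
  show "- x + x = 0" by transfer simp
  show "x - y = x + - y" by transfer simp
  show "r *\<^sub>R (x + y) = r *\<^sub>R x + r *\<^sub>R y" by transfer (simp add: distrib_left)
  show "(r + s) *\<^sub>R x = r *\<^sub>R x + s *\<^sub>R x" by transfer (simp add: distrib_right)
  show "r *\<^sub>R s *\<^sub>R x = (r * s) *\<^sub>R x" by transfer (simp add: mult.assoc)
  show "1 *\<^sub>R x = x" by transfer simp
qed
end

instantiation ell2 :: (type) real_inner
begin
lift_definition inner_ell2 :: "'a ell2 \<Rightarrow> 'a ell2 \<Rightarrow> real" is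
  "\<lambda>f g. infsum (\<lambda>x. Re (cnj (f x) * g x)) UNIV" .
definition norm_ell2 :: "'a ell2 \<Rightarrow> real" where "norm_ell2 v = sqrt (inner v v)"
definition sgn_ell2 :: "'a ell2 \<Rightarrow> 'a ell2" where "sgn_ell2 v = v /\<^sub>R norm v"
definition dist_ell2 :: "'a ell2 \<Rightarrow> 'a ell2 \<Rightarrow> real" where "dist_ell2 v w = norm (v - w)"
definition uniformity_ell2 :: "('a ell2 \<times> 'a ell2) filter" where
  "uniformity_ell2 = (INF e\<in>{0<..}. principal {(x, y). dist x y < e})"
definition open_ell2 :: "'a ell2 set \<Rightarrow> bool" where
  "open_ell2 U = (\<forall>x\<in>U. \<forall>\<^sub>F (x', y) in uniformity. x' = x \<longrightarrow> y \<in> U)"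

lemma re_summable: "(\<lambda>x. Re (cnj (vf v x) * vf w x)) summable_on UNIV"
  using summable_on_Re[OF prod_summable[OF vf_summable vf_summable]] by simp

instance
proof
  fix x y z :: "'a ell2" and r s :: real
  show "sgn x = inverse (norm x) *\<^sub>R x" by (simp add: sgn_ell2_def divide_inverse_commute)
  show "dist x y = norm (x - y)" by (simp add: dist_ell2_def)
  show "inner x y = inner y x"
    by transfer (simp add: algebra_simps)
  show "inner (x + y) z = inner x z + inner y z"
    unfolding inner_ell2.rep_eq plus_ell2.rep_eq
    by (simp only: complex_cnj_add distrib_right plus_complex.sel infsum_add[OF re_summable re_summable])
  show "inner (r *\<^sub>R x) y = r * inner x y"
  proof -
    have e: "\<And>a. Re (cnj (complex_of_real r * vf x a) * vf y a) = r * Re (cnj (vf x a) * vf y a)"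
      by (simp add: algebra_simps)
    show ?thesis unfolding inner_ell2.rep_eq scaleR_ell2.rep_eq e
      by (rule infsum_cmult_right) (rule re_summable)
  qed
  have sq: "inner x x = infsum (\<lambda>a. (cmod (vf x a))^2) UNIV"
    unfolding inner_ell2.rep_eq by (simp add: cmod_power2 flip: power2_eq_square)
  show "0 \<le> inner x x" unfolding sq by (rule infsum_nonneg) simp
  show "inner x x = 0 \<longleftrightarrow> x = 0"
  proof
    assume "inner x x = 0"
    hence "\<forall>a. (cmod (vf x a))^2 = 0"
      using nonneg_infsum_le_0D[OF _ vf_summable] unfolding sq by (metis UNIV_I order_refl zero_le_power2)
    thus "x = 0" by transfer auto
  next
    assume "x = 0" thus "inner x x = 0" by transfer simp
  qed
  show "norm x = sqrt (inner x x)" by (simp add: norm_ell2_def)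
qed (simp_all add: uniformity_ell2_def open_ell2_def)
end

lemma norm_ell2_sq: "(norm v)^2 = infsum (\<lambda>a. (cmod (vf v a))^2) UNIV"
proof -
  have "inner v v = infsum (\<lambda>a. (cmod (vf v a))^2) UNIV"
    unfolding inner_ell2.rep_eq by (simp add: cmod_power2 flip: power2_eq_square)
  thus ?thesis by (simp add: power2_norm_eq_inner)
qed

lemma norm_ell2: "norm v = sqrt (infsum (\<lambda>a. (cmod (vf v a))^2) UNIV)"
  by (metis norm_ell2_sq norm_ge_zero real_sqrt_unique)

lemma finite_sq_le_norm: "finite F \<Longrightarrow> (\<Sum>a\<in>F. (cmod (vf v a))^2) \<le> (norm v)^2"
  unfolding norm_ell2_sq by (rule finite_sum_le_infsum[OF vf_summable]) auto

lemma vf_le_norm: "cmod (vf v a) \<le> norm v"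
proof -
  have "(\<Sum>a\<in>{a}. (cmod (vf v a))^2) \<le> (norm v)^2" by (rule finite_sq_le_norm) simp
  hence "(cmod (vf v a))^2 \<le> (norm v)^2" by simp
  thus ?thesis by (rule power2_le_imp_le) simp
qed

lemmas vf_plus = plus_ell2.rep_eq and vf_minus = minus_ell2.rep_eq and vf_uminus = uminus_ell2.rep_eq
  and vf_scaleR = scaleR_ell2.rep_eq and vf_zero = zero_ell2.rep_eq

lemma norm_le_from_finite:
  assumes "(\<lambda>a. (cmod (vf v a))^2) summable_on UNIV"
    "\<And>F. finite F \<Longrightarrow> (\<Sum>a\<in>F. (cmod (vf v a))^2) \<le> B^2" "0 \<le> B"
  shows "norm v \<le> B"
proof -
  have "(norm v)^2 \<le> B^2" unfolding norm_ell2_sq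
    by (rule infsum_le_finite_sums[OF vf_summable]) (use assms in auto)
  thus ?thesis using assms(3) by (rule power2_le_imp_le)
qed

lemma norm_le_from_finite':
  assumes "\<And>F. finite F \<Longrightarrow> (\<Sum>a\<in>F. (cmod (vf v a))^2) \<le> B^2" "0 \<le> B"
  shows "norm v \<le> B"
  using norm_le_from_finite[OF vf_summable assms] .

lemma bounded_linear_vf: "bounded_linear (\<lambda>v. vf v a)"
proof (rule bounded_linear_intro[where K=1])
  show "\<And>x y. vf (x + y) a = vf x a + vf y a" by (simp add: vf_plus)
  show "\<And>r x. vf (r *\<^sub>R x) a = r *\<^sub>R vf x a" by (simp add: vf_scaleR scaleR_conv_of_real)
  show "\<And>x. norm (vf x a) \<le> norm x * 1" by (simp add: vf_le_norm)
qed

lemma sq_summable_from_finite: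
  assumes "\<And>F. finite F \<Longrightarrow> (\<Sum>a\<in>F. (cmod (f a))^2) \<le> B"
  shows "(\<lambda>a. (cmod (f a))^2) summable_on A"
proof -
  have "(\<lambda>a. (cmod (f a))^2) summable_on UNIV"
    by (rule nonneg_bdd_above_summable_on) (use assms in \<open>auto intro!: bdd_aboveI\<close>)
  thus ?thesis using summable_on_subset_banach by blast
qed

instance ell2 :: (type) banach
proof
  fix X :: "nat \<Rightarrow> 'a ell2" assume C: "Cauchy X"
  have pc: "Cauchy (\<lambda>n. vf (X n) a)" for a
  proof (rule metric_CauchyI)
    fix e :: real assume "0 < e"
    then obtain N where N: "\<forall>m\<ge>N. \<forall>n\<ge>N. dist (X m) (X n) < e" using metric_CauchyD[OF C] by blast
    have "dist (vf (X m) a) (vf (X n) a) < e" if "m \<ge> N" "n \<ge> N" for m n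
    proof -
      have "dist (vf (X m) a) (vf (X n) a) = cmod (vf (X m - X n) a)" by (simp add: dist_norm vf_minus)
      also have "\<dots> \<le> norm (X m - X n)" by (rule vf_le_norm)
      also have "\<dots> < e" using N that by (simp add: dist_norm)
      finally show ?thesis .
    qed
    thus "\<exists>M. \<forall>m\<ge>M. \<forall>n\<ge>M. dist (vf (X m) a) (vf (X n) a) < e" by blast
  qed
  define g where "g a = lim (\<lambda>n. vf (X n) a)" for a
  have lim: "(\<lambda>n. vf (X n) a) \<longlonglongrightarrow> g a" for a
    using pc[of a] unfolding g_def by (simp add: Cauchy_convergent_iff convergent_LIMSEQ_iff)
  have key: "\<exists>N. \<forall>n\<ge>N. (\<forall>F. finite F \<longrightarrow> (\<Sum>a\<in>F. (cmod (vf (X n) a - g a))^2) \<le> e^2)"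
    if "e > 0" for e
  proof -
    obtain N where N: "\<forall>m\<ge>N. \<forall>n\<ge>N. dist (X m) (X n) < e" using metric_CauchyD[OF C \<open>e>0\<close>] by blast
    have "(\<Sum>a\<in>F. (cmod (vf (X n) a - g a))^2) \<le> e^2" if "n \<ge> N" "finite F" for n F
    proof (rule tendsto_le[OF trivial_limit_sequentially])
      show "(\<lambda>m. \<Sum>a\<in>F. (cmod (vf (X n) a - vf (X m) a))^2) \<longlonglongrightarrow> (\<Sum>a\<in>F. (cmod (vf (X n) a - g a))^2)"
        by (intro tendsto_intros lim)
      show "(\<lambda>m. e^2) \<longlonglongrightarrow> e^2" by simp
      show "\<forall>\<^sub>F m in sequentially. (\<Sum>a\<in>F. (cmod (vf (X n) a - vf (X m) a))^2) \<le> e^2"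
      proof (rule eventually_sequentiallyI[of N])
        fix m assume "m \<ge> N"
        have "(\<Sum>a\<in>F. (cmod (vf (X n) a - vf (X m) a))^2) = (\<Sum>a\<in>F. (cmod (vf (X n - X m) a))^2)"
          by (simp add: vf_minus)
        also have "\<dots> \<le> (norm (X n - X m))^2" by (rule finite_sq_le_norm[OF \<open>finite F\<close>])
        also have "\<dots> \<le> e^2" using N \<open>m \<ge> N\<close> \<open>n \<ge> N\<close>
          by (intro power_mono) (auto simp: dist_norm less_imp_le)
        finally show "(\<Sum>a\<in>F. (cmod (vf (X n) a - vf (X m) a))^2) \<le> e^2" .
      qed
    qed
    thus ?thesis by blast
  qed
  obtain N1 where N1: "\<forall>n\<ge>N1. \<forall>F. finite F \<longrightarrow> (\<Sum>a\<in>F. (cmod (vf (X n) a - g a))^2) \<le> 1^2"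
    using key[of 1] by auto
  have d1: "(\<lambda>a. (cmod (vf (X N1) a - g a))^2) summable_on UNIV"
    by (rule sq_summable_from_finite) (use N1 in auto)
  have gs: "(\<lambda>a. (cmod (g a))^2) summable_on UNIV"
  proof -
    have "(\<lambda>a. (cmod (vf (X N1) a + (-1) * (vf (X N1) a - g a)))^2) summable_on UNIV"
      by (rule sq_summable_add[OF vf_summable sq_summable_scale[OF d1]])
    thus ?thesis by simp
  qed
  define G where "G = Abs_ell2 g"
  have vfG: "vf G = g" unfolding G_def using gs by (simp add: Abs_ell2_inverse)
  have "X \<longlonglongrightarrow> G"
  proof (rule metric_LIMSEQ_I)
    fix e :: real assume "e > 0"
    hence "e/2 > 0" by simp
    from key[OF this] obtain N where N: "\<forall>n\<ge>N. \<forall>F. finite F \<longrightarrow> (\<Sum>a\<in>F. (cmod (vf (X n) a - g a))^2) \<le> (e/2)^2"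
      by blast
    have "dist (X n) G < e" if "n \<ge> N" for n
    proof -
      have "norm (X n - G) \<le> e/2"
        by (rule norm_le_from_finite') (use N that \<open>e>0\<close> in \<open>auto simp: vf_minus vfG\<close>)
      thus ?thesis using \<open>e > 0\<close> by (simp add: dist_norm)
    qed
    thus "\<exists>N. \<forall>n\<ge>N. dist (X n) G < e" by blast
  qed
  thus "convergent X" by (rule convergentI)
qed

lift_definition cscale :: "complex \<Rightarrow> 'i ell2 \<Rightarrow> 'i ell2" is "\<lambda>c f x. c * f x"
  by (simp add: sq_summable_scale)

lemmas vf_cscale = cscale.rep_eq

lemma cscale_add: "cscale c (v + w) = cscale c v + cscale c w"
  by transfer (simp add: distrib_left)
lemma cscale_scaleR: "cscale c (r *\<^sub>R v) = r *\<^sub>R cscale c v"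
  by transfer (simp add: algebra_simps)
lemma cscale_cscale: "cscale c (cscale d v) = cscale (c * d) v"
  by transfer (simp add: algebra_simps)
lemma cscale_one[simp]: "cscale 1 v = v"
  by transfer simp
lemma cscale_of_real: "cscale (complex_of_real r) v = r *\<^sub>R v"
  by transfer simp
lemma norm_cscale: "norm (cscale c v) = cmod c * norm v"
proof -
  have "(norm (cscale c v))^2 = (cmod c * norm v)^2"
    unfolding norm_ell2_sq power_mult_distrib
    by (simp add: vf_cscale norm_mult power_mult_distrib infsum_cmult_right vf_summable)
  thus ?thesis by (simp add: power2_eq_iff_nonneg)
qed
lemma bounded_linear_cscale: "bounded_linear (cscale c)"
  by (rule bounded_linear_intro[where K="cmod c"]) (auto simp: cscale_add cscale_scaleR norm_cscale)

lemma sum_basis_summable: "(\<lambda>x. (cmod (basis y x))^2) summable_on UNIV"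
proof (rule sq_summable_from_finite[where B=1])
  fix F :: "'a set" assume "finite F"
  have "(\<Sum>x\<in>F. (cmod (basis y x))^2) = (\<Sum>x\<in>F. if x = y then 1 else 0)"
    by (rule sum.cong) (auto simp: basis_def)
  also have "\<dots> \<le> 1" using \<open>finite F\<close> by (simp add: sum.delta')
  finally show "(\<Sum>x\<in>F. (cmod (basis y x))^2) \<le> 1" .
qed

lift_definition ket :: "'i \<Rightarrow> 'i ell2" is basis by (rule sum_basis_summable)

lemma vf_ket: "vf (ket y) x = (if x = y then 1 else 0)"
  by transfer (simp add: basis_def)

lemma ket_neq0: "ket y \<noteq> 0"
proof
  assume "ket y = 0" hence "vf (ket y) y = vf 0 y" by simp
  thus False by (simp add: vf_ket vf_zero)
qed

lemma vf_sum: "vf (sum f F) a = (\<Sum>y\<in>F. vf (f y) a)"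
  by (induction F rule: infinite_finite_induct) (auto simp: vf_plus vf_zero)

lemma ket_expansion: "((\<lambda>y. cscale (vf v y) (ket y)) has_sum v) UNIV"
proof -
  define h where "h a = (cmod (vf v a))^2" for a
  have hs: "(h has_sum infsum h UNIV) UNIV" unfolding h_def using vf_summable[of v UNIV] by (rule has_sum_infsum)
  have nrm: "(norm (v - (\<Sum>y\<in>F. cscale (vf v y) (ket y))))^2 = infsum h UNIV - sum h F"
    if "finite F" for F
  proof -
    have vfe: "vf (v - (\<Sum>y\<in>F. cscale (vf v y) (ket y))) a = (if a \<in> F then 0 else vf v a)" for a
      using that by (simp add: vf_minus vf_sum vf_cscale vf_ket if_distrib[of "\<lambda>x. _ * x"] sum.If_cases)
    have s1: "(\<lambda>a. if a \<in> F then 0 else h a) summable_on UNIV"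
      by (rule summable_on_comparison_test[OF vf_summable[of v]]) (auto simp: h_def)
    have s2: "(\<lambda>a. if a \<in> F then h a else 0) summable_on UNIV"
      using that by (intro finite_nonzero_values_imp_summable_on) (auto elim: finite_subset[rotated])
    have "infsum (\<lambda>a. if a \<in> F then h a else 0) UNIV = infsum h F"
      by (rule infsum_cong_neutral) auto
    also have "\<dots> = sum h F" using that by simp
    finally have i2: "infsum (\<lambda>a. if a \<in> F then h a else 0) UNIV = sum h F" .
    have "infsum h UNIV = infsum (\<lambda>a. (if a \<in> F then 0 else h a) + (if a \<in> F then h a else 0)) UNIV"
      by (rule infsum_cong) simp
    also have "\<dots> = infsum (\<lambda>a. if a \<in> F then 0 else h a) UNIV + sum h F"
      using infsum_add[OF s1 s2] i2 by simp
    finally have "infsum (\<lambda>a. if a \<in> F then 0 else h a) UNIV = infsum h UNIV - sum h F" by simp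
    moreover have "(\<lambda>a. (cmod (vf (v - (\<Sum>y\<in>F. cscale (vf v y) (ket y))) a))^2) = (\<lambda>a. if a \<in> F then 0 else h a)"
      by (auto simp: vfe h_def)
    ultimately show ?thesis unfolding norm_ell2_sq by simp
  qed
  show ?thesis unfolding has_sum_def
  proof (rule tendstoI)
    fix e :: real assume "e > 0"
    hence "e^2 > 0" by simp
    have "\<forall>\<^sub>F F in finite_subsets_at_top UNIV. dist (sum h F) (infsum h UNIV) < e^2"
      using hs unfolding has_sum_def using tendstoD[OF _ \<open>e^2 > 0\<close>] by blast
    moreover have "\<forall>\<^sub>F F in finite_subsets_at_top UNIV. finite F"
      by (simp add: eventually_finite_subsets_at_top_weakI)
    ultimately show "\<forall>\<^sub>F F in finite_subsets_at_top UNIV. dist (\<Sum>y\<in>F. cscale (vf v y) (ket y)) v < e"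
    proof eventually_elim
      case (elim F)
      have "(dist (\<Sum>y\<in>F. cscale (vf v y) (ket y)) v)^2 = infsum h UNIV - sum h F"
        using nrm[OF elim(2)] by (simp add: dist_norm norm_minus_commute)
      also have "\<dots> < e^2" using elim(1) by (simp add: dist_real_def)
      finally show ?case using \<open>e > 0\<close> by (simp add: power_less_imp_less_base)
    qed
  qed
qed

lemma cscale_zero[simp]: "cscale c 0 = 0" by transfer simp

typedef 'i bop = "{W :: 'i ell2 \<Rightarrow>\<^sub>L 'i ell2. \<forall>c v. blinfun_apply W (cscale c v) = cscale c (blinfun_apply W v)}"
  morphisms bl Abs_bop
  by (rule exI[of _ 0]) simp

setup_lifting type_definition_bop

lemma cscale_minus: "cscale c (v - w) = cscale c v - cscale c w" by transfer (simp add: algebra_simps)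
lemma cscale_uminus: "cscale c (- v) = - cscale c v" by transfer (simp add: algebra_simps)

instantiation bop :: (type) real_normed_vector
begin
lift_definition zero_bop :: "'a bop" is 0 by simp
lift_definition plus_bop :: "'a bop \<Rightarrow> 'a bop \<Rightarrow> 'a bop" is "(+)" by (simp add: blinfun.add_left cscale_add)
lift_definition minus_bop :: "'a bop \<Rightarrow> 'a bop \<Rightarrow> 'a bop" is "(-)" by (simp add: blinfun.diff_left cscale_minus)
lift_definition uminus_bop :: "'a bop \<Rightarrow> 'a bop" is "uminus" by (simp add: blinfun.minus_left cscale_uminus)
lift_definition scaleR_bop :: "real \<Rightarrow> 'a bop \<Rightarrow> 'a bop" is "scaleR" by (simp add: blinfun.scaleR_left cscale_scaleR)
lift_definition norm_bop :: "'a bop \<Rightarrow> real" is norm .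
definition sgn_bop :: "'a bop \<Rightarrow> 'a bop" where "sgn_bop x = inverse (norm x) *\<^sub>R x"
definition dist_bop :: "'a bop \<Rightarrow> 'a bop \<Rightarrow> real" where "dist_bop v w = norm (v - w)"
definition uniformity_bop :: "('a bop \<times> 'a bop) filter" where
  "uniformity_bop = (INF e\<in>{0<..}. principal {(x, y). dist x y < e})"
definition open_bop :: "'a bop set \<Rightarrow> bool" where
  "open_bop U = (\<forall>x\<in>U. \<forall>\<^sub>F (x', y) in uniformity. x' = x \<longrightarrow> y \<in> U)"
instance
proof
  fix x y z :: "'a bop" and r s :: real
  show "x + y + z = x + (y + z)" by transfer (rule add.assoc)
  show "x + y = y + x" by transfer (rule add.commute)
  show "0 + x = x" by transfer simp
  show "- x + x = 0" by transfer simp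
  show "x - y = x + - y" by transfer simp
  show "r *\<^sub>R (x + y) = r *\<^sub>R x + r *\<^sub>R y" by transfer (rule scaleR_add_right)
  show "(r + s) *\<^sub>R x = r *\<^sub>R x + s *\<^sub>R x" by transfer (rule scaleR_add_left)
  show "r *\<^sub>R s *\<^sub>R x = (r * s) *\<^sub>R x" by transfer simp
  show "1 *\<^sub>R x = x" by transfer simp
  show "sgn x = inverse (norm x) *\<^sub>R x" by (simp add: sgn_bop_def)
  show "dist x y = norm (x - y)" by (simp add: dist_bop_def)
  show "(norm x = 0) = (x = 0)" by transfer simp
  show "norm (x + y) \<le> norm x + norm y" by transfer (rule norm_triangle_ineq)
  show "norm (r *\<^sub>R x) = \<bar>r\<bar> * norm x" by transfer simp
qed (simp_all add: uniformity_bop_def open_bop_def)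
end

instantiation bop :: (type) real_normed_algebra_1
begin
lift_definition one_bop :: "'a bop" is id_blinfun by simp
lift_definition times_bop :: "'a bop \<Rightarrow> 'a bop \<Rightarrow> 'a bop" is "(o\<^sub>L)" by simp
instance
proof
  fix a b c :: "'a bop" and r :: real
  show "a * b * c = a * (b * c)" by transfer (rule blinfun_eqI, simp)
  show "1 * a = a" by transfer (rule blinfun_eqI, simp)
  show "a * 1 = a" by transfer (rule blinfun_eqI, simp)
  show "(a + b) * c = a * c + b * c" by transfer (rule blinfun_eqI, simp add: blinfun.add_left)
  show "a * (b + c) = a * b + a * c" by transfer (rule blinfun_eqI, simp add: blinfun.add_left blinfun.add_right)
  show "r *\<^sub>R a * b = r *\<^sub>R (a * b)" by transfer (rule blinfun_eqI, simp add: blinfun.scaleR_left)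
  show "a * r *\<^sub>R b = r *\<^sub>R (a * b)" by transfer (rule blinfun_eqI, simp add: blinfun.scaleR_left blinfun.scaleR_right)
  show "norm (a * b) \<le> norm a * norm b" by transfer (rule norm_blinfun_compose)
  have "norm (id_blinfun :: 'a ell2 \<Rightarrow>\<^sub>L 'a ell2) = 1"
  proof (rule antisym[OF norm_blinfun_id_le])
    have k: "0 < norm (ket undefined :: 'a ell2)" using ket_neq0[of "undefined::'a"] by simp
    have h: "1 * norm (ket undefined :: 'a ell2) \<le> norm (id_blinfun :: 'a ell2 \<Rightarrow>\<^sub>L 'a ell2) * norm (ket undefined :: 'a ell2)"
      using norm_blinfun[of "id_blinfun :: 'a ell2 \<Rightarrow>\<^sub>L 'a ell2" "ket undefined :: 'a ell2"]
      by (simp only: blinfun_apply_id_blinfun mult_1)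
    show "1 \<le> norm (id_blinfun :: 'a ell2 \<Rightarrow>\<^sub>L 'a ell2)" by (rule mult_right_le_imp_le[OF h k])
  qed
  thus "norm (1::'a bop) = 1" by (simp add: norm_bop.rep_eq one_bop.rep_eq)
  show "(0::'a bop) \<noteq> 1"
  proof
    assume "(0::'a bop) = 1"
    hence "bl (0::'a bop) = bl 1" by simp
    hence "(0::'a ell2 \<Rightarrow>\<^sub>L 'a ell2) = id_blinfun" by (simp add: zero_bop.rep_eq one_bop.rep_eq)
    hence "blinfun_apply (0::'a ell2 \<Rightarrow>\<^sub>L 'a ell2) (ket undefined) = blinfun_apply id_blinfun (ket undefined)"
      by (rule arg_cong[where f="\<lambda>W. blinfun_apply W (ket undefined)"])
    thus False using ket_neq0[of "undefined::'a"] by simp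
  qed
qed
end

lemma bl_tendsto: "(X \<longlonglongrightarrow> L) \<longleftrightarrow> ((\<lambda>n. bl (X n)) \<longlonglongrightarrow> bl L)"
  unfolding tendsto_iff dist_bop_def dist_blinfun_def by (simp add: norm_bop.rep_eq minus_bop.rep_eq)

instance bop :: (type) banach
proof
  fix X :: "nat \<Rightarrow> 'a bop" assume C: "Cauchy X"
  have "Cauchy (\<lambda>n. bl (X n))"
    using C unfolding Cauchy_def dist_bop_def dist_blinfun_def by (simp add: norm_bop.rep_eq minus_bop.rep_eq)
  hence "convergent (\<lambda>n. bl (X n))" by (simp add: Cauchy_convergent_iff)
  then obtain L where L: "(\<lambda>n. bl (X n)) \<longlonglongrightarrow> L" by (auto simp: convergent_def)
  have "blinfun_apply L (cscale c v) = cscale c (blinfun_apply L v)" for c v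
  proof (rule LIMSEQ_unique)
    show "(\<lambda>n. blinfun_apply (bl (X n)) (cscale c v)) \<longlonglongrightarrow> blinfun_apply L (cscale c v)"
      by (intro tendsto_intros L)
    have "(\<lambda>n. cscale c (blinfun_apply (bl (X n)) v)) \<longlonglongrightarrow> cscale c (blinfun_apply L v)"
      by (rule bounded_linear.tendsto[OF bounded_linear_cscale]) (intro tendsto_intros L)
    moreover have "blinfun_apply (bl (X n)) (cscale c v) = cscale c (blinfun_apply (bl (X n)) v)" for n
      using bl[of "X n"] by simp
    ultimately show "(\<lambda>n. blinfun_apply (bl (X n)) (cscale c v)) \<longlonglongrightarrow> cscale c (blinfun_apply L v)" by simp
  qed
  hence "bl (Abs_bop L) = L" by (simp add: Abs_bop_inverse)
  hence "X \<longlonglongrightarrow> Abs_bop L" using L by (simp add: bl_tendsto)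
  thus "convergent X" by (rule convergentI)
qed

definition ap :: "'i bop \<Rightarrow> 'i ell2 \<Rightarrow> 'i ell2" where "ap W v = blinfun_apply (bl W) v"

lemma ap_mult: "ap (W * V) v = ap W (ap V v)" unfolding ap_def by (simp add: times_bop.rep_eq)
lemma ap_one[simp]: "ap 1 v = v" unfolding ap_def by (simp add: one_bop.rep_eq)
lemma ap_zero_op[simp]: "ap 0 v = 0" unfolding ap_def by (simp add: zero_bop.rep_eq)
lemma ap_plus_op: "ap (W + V) v = ap W v + ap V v" unfolding ap_def by (simp add: plus_bop.rep_eq blinfun.add_left)
lemma ap_minus_op: "ap (W - V) v = ap W v - ap V v" unfolding ap_def by (simp add: minus_bop.rep_eq blinfun.diff_left)
lemma ap_scaleR_op: "ap (r *\<^sub>R W) v = r *\<^sub>R ap W v" unfolding ap_def by (simp add: scaleR_bop.rep_eq blinfun.scaleR_left)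
lemma ap_add: "ap W (v + w) = ap W v + ap W w" unfolding ap_def by (simp add: blinfun.add_right)
lemma ap_diff: "ap W (v - w) = ap W v - ap W w" unfolding ap_def by (simp add: blinfun.diff_right)
lemma ap_zero[simp]: "ap W 0 = 0" unfolding ap_def by simp
lemma ap_scaleR: "ap W (r *\<^sub>R v) = r *\<^sub>R ap W v" unfolding ap_def by (simp add: blinfun.scaleR_right)
lemma ap_cscale: "ap W (cscale c v) = cscale c (ap W v)" unfolding ap_def using bl[of W] by simp
lemma ap_sum_op: "ap (sum f F) v = (\<Sum>i\<in>F. ap (f i) v)"
  by (induction F rule: infinite_finite_induct) (auto simp: ap_plus_op)
lemma ap_norm: "norm (ap W v) \<le> norm W * norm v"
  unfolding ap_def by (simp add: norm_bop.rep_eq norm_blinfun)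
lemma bounded_linear_ap: "bounded_linear (ap W)"
  unfolding ap_def by (rule blinfun.bounded_linear_right)
lemma bounded_linear_ap_left: "bounded_linear (\<lambda>W. ap W v)"
proof -
  have "bounded_linear (\<lambda>W::'a bop. blinfun_apply (bl W) v)"
    by (rule bounded_linear_intro[where K="norm v"])
       (auto simp: plus_bop.rep_eq scaleR_bop.rep_eq blinfun.add_left blinfun.scaleR_left norm_bop.rep_eq
             intro: order_trans[OF norm_blinfun] simp: mult.commute)
  thus ?thesis unfolding ap_def .
qed
lemma bop_eqI: "(\<And>v. ap W v = ap V v) \<Longrightarrow> W = V"
  unfolding ap_def by (metis bl_inject blinfun_eqI)

lemma ap_power_Suc: "ap (W ^ Suc n) v = ap W (ap (W ^ n) v)" by (simp add: ap_mult)

definition mkop :: "('i ell2 \<Rightarrow> 'i ell2) \<Rightarrow> 'i bop" where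
  "mkop f = Abs_bop (Blinfun f)"

lemma ap_mkop:
  assumes "bounded_linear f" "\<And>c v. f (cscale c v) = cscale c (f v)"
  shows "ap (mkop f) = f"
proof -
  have "Blinfun f \<in> {W. \<forall>c v. blinfun_apply W (cscale c v) = cscale c (blinfun_apply W v)}"
    using assms by (simp add: bounded_linear_Blinfun_apply)
  thus ?thesis unfolding ap_def mkop_def using assms
    by (simp add: Abs_bop_inverse bounded_linear_Blinfun_apply)
qed

definition cI :: "complex \<Rightarrow> 'i bop" where "cI c = mkop (cscale c)"

lemma ap_cI: "ap (cI c) v = cscale c v"
  unfolding cI_def by (subst ap_mkop) (auto simp: bounded_linear_cscale cscale_cscale mult.commute)

lemma cI_commute: "cI c * W = W * cI c"
  by (rule bop_eqI) (simp add: ap_mult ap_cI ap_cscale)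

lemma matrix_rep: "((\<lambda>y. vf v y * vf (ap W (ket y)) a) has_sum vf (ap W v) a) UNIV"
proof -
  have bl: "bounded_linear (\<lambda>u. vf (ap W u) a)"
    by (rule bounded_linear_compose[OF bounded_linear_vf bounded_linear_ap])
  from has_sum_bounded_linear[OF bl ket_expansion[of v]]
  show ?thesis by (simp add: ap_cscale vf_cscale)
qed

lemma bop_eq_ket: "(\<And>y. ap W (ket y) = ap V (ket y)) \<Longrightarrow> W = V"
proof (rule bop_eqI)
  fix v assume "\<And>y. ap W (ket y) = ap V (ket y)"
  hence "vf (ap W v) a = vf (ap V v) a" for a
    using matrix_rep[of v W a] matrix_rep[of v V a] by (simp add: has_sum_unique)
  thus "ap W v = ap V v" by (simp add: vf_inject[symmetric] fun_eq_iff)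
qed

lemma exp_sums_pointwise:
  "(\<lambda>k. vf (ap (W ^ k) v) a / of_nat (fact k)) sums vf (ap (exp W) v) a"
proof -
  have h: "bounded_linear (\<lambda>W. vf (ap W v) a)"
    by (rule bounded_linear_compose[OF bounded_linear_vf bounded_linear_ap_left])
  have "(\<lambda>n. W ^ n /\<^sub>R fact n) sums exp W"
    unfolding exp_def by (rule summable_sums[OF summable_exp_generic])
  from bounded_linear.sums[OF h this]
  show ?thesis by (simp add: ap_scaleR_op vf_scaleR divide_inverse mult.commute of_real_inverse)
qed

definition VS :: "'i set \<Rightarrow> 'i ell2 set" where "VS S = {v. \<forall>x. x \<notin> S \<longrightarrow> vf v x = 0}"
definition pres :: "'i set \<Rightarrow> 'i bop \<Rightarrow> bool" where "pres S W \<longleftrightarrow> (\<forall>v\<in>VS S. ap W v \<in> VS S)"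
definition repr :: "'i set \<Rightarrow> (('i \<Rightarrow> complex) \<Rightarrow> ('i \<Rightarrow> complex)) \<Rightarrow> 'i bop \<Rightarrow> bool" where
  "repr S F W \<longleftrightarrow> pres S W \<and> (\<forall>\<psi>\<in>l2 S. F \<psi> = vf (ap W (Abs_ell2 \<psi>)))"
definition restr :: "'i set \<Rightarrow> ('i \<Rightarrow> complex) \<Rightarrow> ('i \<Rightarrow> complex)" where
  "restr S f = (\<lambda>x. if x \<in> S then f x else 0)"

lemma l2_summable: "\<psi> \<in> l2 S \<Longrightarrow> (\<lambda>x. (cmod (\<psi> x))^2) summable_on UNIV"
  by (simp add: l2_def)
lemma vf_Abs_l2: "\<psi> \<in> l2 S \<Longrightarrow> vf (Abs_ell2 \<psi>) = \<psi>"
  by (simp add: Abs_ell2_inverse l2_def)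
lemma Abs_l2_VS: "\<psi> \<in> l2 S \<Longrightarrow> Abs_ell2 \<psi> \<in> VS S"
  by (simp add: VS_def vf_Abs_l2) (simp add: l2_def)
lemma vf_l2_iff: "vf v \<in> l2 S \<longleftrightarrow> v \<in> VS S"
  by (simp add: l2_def VS_def vf_summable)
lemma l2_norm_eq: "\<psi> \<in> l2 S \<Longrightarrow> l2_norm \<psi> = norm (Abs_ell2 \<psi>)"
  by (simp add: l2_norm_def norm_ell2 vf_Abs_l2)
lemma Abs_vf: "Abs_ell2 (vf v) = v" by (rule vf_inverse)

lemma restr_summable: "(\<lambda>x. (cmod (restr S (vf v) x))^2) summable_on UNIV"
  by (rule summable_on_comparison_test[OF vf_summable[of v]]) (auto simp: restr_def)
lemma restr_l2: "restr S (vf v) \<in> l2 S"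
  using restr_summable by (auto simp: l2_def restr_def)
lemma norm_restr: "norm (Abs_ell2 (restr S (vf v))) \<le> norm v"
proof -
  have "vf (Abs_ell2 (restr S (vf v))) = restr S (vf v)" using restr_l2 by (rule vf_Abs_l2)
  thus ?thesis
    by (intro norm_le_from_finite') (auto simp: restr_def intro!: order_trans[OF _ finite_sq_le_norm[of _ v]] sum_mono)
qed
lemma VS_zero[simp]: "0 \<in> VS S" by (simp add: VS_def vf_zero)
lemma VS_add: "v \<in> VS S \<Longrightarrow> w \<in> VS S \<Longrightarrow> v + w \<in> VS S" by (simp add: VS_def vf_plus)
lemma VS_scaleR: "v \<in> VS S \<Longrightarrow> r *\<^sub>R v \<in> VS S" by (simp add: VS_def vf_scaleR)
lemma VS_cscale: "v \<in> VS S \<Longrightarrow> cscale c v \<in> VS S" by (simp add: VS_def vf_cscale)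
lemma VS_sum: "(\<And>i. i \<in> I \<Longrightarrow> f i \<in> VS S) \<Longrightarrow> sum f I \<in> VS S"
  by (induction I rule: infinite_finite_induct) (auto intro: VS_add)
lemma restr_VS: "v \<in> VS S \<Longrightarrow> restr S (vf v) = vf v"
  by (auto simp: restr_def VS_def fun_eq_iff)

lemma pres_mult: "pres S W \<Longrightarrow> pres S V \<Longrightarrow> pres S (W * V)" by (simp add: pres_def ap_mult)
lemma pres_one: "pres S 1" by (simp add: pres_def)
lemma pres_zero: "pres S 0" by (simp add: pres_def)
lemma pres_add: "pres S W \<Longrightarrow> pres S V \<Longrightarrow> pres S (W + V)" by (simp add: pres_def ap_plus_op VS_add)
lemma pres_scaleR: "pres S W \<Longrightarrow> pres S (r *\<^sub>R W)" by (simp add: pres_def ap_scaleR_op VS_scaleR)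
lemma pres_cI: "pres S (cI c)" by (simp add: pres_def ap_cI VS_cscale)
lemma pres_sum: "(\<And>i. i \<in> I \<Longrightarrow> pres S (f i)) \<Longrightarrow> pres S (sum f I)"
  by (induction I rule: infinite_finite_induct) (auto intro: pres_add pres_zero)
lemma pres_power: "pres S W \<Longrightarrow> pres S (W ^ k)"
  by (induction k) (auto intro: pres_mult pres_one)
lemma pres_exp: assumes "pres S W" shows "pres S (exp W)"
  unfolding pres_def
proof
  fix v assume v: "v \<in> VS S"
  show "ap (exp W) v \<in> VS S" unfolding VS_def mem_Collect_eq
  proof (intro allI impI)
    fix x assume "x \<notin> S"
    have "vf (ap (W ^ k) v) x = 0" for k
      using pres_power[OF assms, of k] v \<open>x \<notin> S\<close> by (auto simp: pres_def VS_def)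
    thus "vf (ap (exp W) v) x = 0" using exp_sums_pointwise[of W v x] by (simp add: sums_0 sums_unique2)
  qed
qed

lemma VS_ket: "y \<in> S \<Longrightarrow> ket y \<in> VS S" by (simp add: VS_def vf_ket)

definition opS :: "'i set \<Rightarrow> (('i \<Rightarrow> complex) \<Rightarrow> ('i \<Rightarrow> complex)) \<Rightarrow> 'i bop" where
  "opS S F = mkop (\<lambda>v. Abs_ell2 (F (restr S (vf v))))"

lemma bounded_op_lin:
  assumes "bounded_op S F" "f \<in> l2 S" "g \<in> l2 S"
  shows "F (\<lambda>x. a * f x + b * g x) = (\<lambda>x. a * F f x + b * F g x)"
  using assms unfolding bounded_op_def by blast

lemma zero_l2: "(\<lambda>_. 0) \<in> l2 S" by (simp add: l2_def)

lemma bounded_op_add: "bounded_op S F \<Longrightarrow> f \<in> l2 S \<Longrightarrow> g \<in> l2 S \<Longrightarrow> F (\<lambda>x. f x + g x) = (\<lambda>x. F f x + F g x)"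
  using bounded_op_lin[of S F f g 1 1] by simp
lemma bounded_op_scale: "bounded_op S F \<Longrightarrow> f \<in> l2 S \<Longrightarrow> F (\<lambda>x. a * f x) = (\<lambda>x. a * F f x)"
proof -
  assume a: "bounded_op S F" "f \<in> l2 S"
  have "F (\<lambda>x. a * f x + 0 * f x) = (\<lambda>x. a * F f x + 0 * F f x)" by (rule bounded_op_lin[OF a a(2)])
  thus ?thesis by simp
qed
lemma bounded_op_l2: "bounded_op S F \<Longrightarrow> f \<in> l2 S \<Longrightarrow> F f \<in> l2 S"
  unfolding bounded_op_def by blast

lemma restr_add: "restr S (vf (v + w)) = (\<lambda>x. restr S (vf v) x + restr S (vf w) x)"
  by (auto simp: restr_def vf_plus)
lemma restr_cscale: "restr S (vf (cscale c v)) = (\<lambda>x. c * restr S (vf v) x)"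
  by (auto simp: restr_def vf_cscale)
lemma restr_scaleR: "restr S (vf (r *\<^sub>R v)) = (\<lambda>x. complex_of_real r * restr S (vf v) x)"
  by (auto simp: restr_def vf_scaleR)

lemma Abs_add_l2: "f \<in> l2 S \<Longrightarrow> g \<in> l2 S \<Longrightarrow> Abs_ell2 (\<lambda>x. f x + g x) = Abs_ell2 f + Abs_ell2 g"
  by (rule vf_inject[THEN iffD1]) (simp add: vf_plus vf_Abs_l2 l2_def Abs_ell2_inverse sq_summable_add)
lemma Abs_scale_l2: "f \<in> l2 S \<Longrightarrow> Abs_ell2 (\<lambda>x. c * f x) = cscale c (Abs_ell2 f)"
  by (rule vf_inject[THEN iffD1]) (simp add: vf_cscale vf_Abs_l2 l2_def Abs_ell2_inverse sq_summable_scale)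

lemma ap_opS:
  assumes "bounded_op S F"
  shows "ap (opS S F) v = Abs_ell2 (F (restr S (vf v)))"
proof -
  obtain C where C: "\<forall>f\<in>l2 S. l2_norm (F f) \<le> C * l2_norm f" using assms unfolding bounded_op_def by blast
  have Fl: "F (restr S (vf v)) \<in> l2 S" for v using bounded_op_l2[OF assms restr_l2] .
  have bl: "bounded_linear (\<lambda>v. Abs_ell2 (F (restr S (vf v))))"
  proof (rule bounded_linear_intro[where K="max C 0"])
    fix v w :: "'a ell2" and r :: real
    show "Abs_ell2 (F (restr S (vf (v + w)))) = Abs_ell2 (F (restr S (vf v))) + Abs_ell2 (F (restr S (vf w)))"
      unfolding restr_add bounded_op_add[OF assms restr_l2 restr_l2] by (rule Abs_add_l2[OF Fl Fl])
    show "Abs_ell2 (F (restr S (vf (r *\<^sub>R v)))) = r *\<^sub>R Abs_ell2 (F (restr S (vf v)))"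
      unfolding restr_scaleR bounded_op_scale[OF assms restr_l2] Abs_scale_l2[OF Fl] cscale_of_real ..
    have "norm (Abs_ell2 (F (restr S (vf v)))) = l2_norm (F (restr S (vf v)))" using l2_norm_eq[OF Fl] by simp
    also have "\<dots> \<le> C * l2_norm (restr S (vf v))" using C restr_l2 by blast
    also have "\<dots> \<le> max C 0 * l2_norm (restr S (vf v))"
      by (intro mult_right_mono) (auto simp: l2_norm_def intro!: infsum_nonneg)
    also have "\<dots> \<le> max C 0 * norm v"
      using norm_restr[of S v] l2_norm_eq[OF restr_l2, of S v] by (intro mult_left_mono) auto
    finally show "norm (Abs_ell2 (F (restr S (vf v)))) \<le> norm v * max C 0" by (simp add: mult.commute)
  qed
  have cl: "Abs_ell2 (F (restr S (vf (cscale c v)))) = cscale c (Abs_ell2 (F (restr S (vf v))))" for c v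
    unfolding restr_cscale bounded_op_scale[OF assms restr_l2] by (rule Abs_scale_l2[OF Fl])
  show ?thesis unfolding opS_def by (subst ap_mkop[OF bl cl]) rule
qed

lemma repr_opS: assumes "bounded_op S F" shows "repr S F (opS S F)"
  unfolding repr_def pres_def
proof (intro conjI ballI)
  fix v :: "'a ell2" assume "v \<in> VS S"
  show "ap (opS S F) v \<in> VS S" unfolding ap_opS[OF assms]
    using Abs_l2_VS[OF bounded_op_l2[OF assms restr_l2]] .
next
  fix \<psi> assume "\<psi> \<in> l2 S"
  hence "restr S \<psi> = \<psi>" by (auto simp: restr_def l2_def fun_eq_iff)
  thus "F \<psi> = vf (ap (opS S F) (Abs_ell2 \<psi>))"
    unfolding ap_opS[OF assms] using \<open>\<psi> \<in> l2 S\<close> bounded_op_l2[OF assms \<open>\<psi> \<in> l2 S\<close>]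
    by (simp add: vf_Abs_l2)
qed

lemma opS_kills: "bounded_op S F \<Longrightarrow> restr S (vf v) = restr S (vf w) \<Longrightarrow> ap (opS S F) v = ap (opS S F) w"
  by (simp add: ap_opS)

lemma opS_ket_out: "bounded_op S F \<Longrightarrow> y \<notin> S \<Longrightarrow> ap (opS S F) (ket y) = 0"
proof -
  assume a: "bounded_op S F" "y \<notin> S"
  have "restr S (vf (ket y)) = restr S (vf 0)" using a(2) by (auto simp: restr_def vf_ket vf_zero)
  hence "ap (opS S F) (ket y) = ap (opS S F) 0" by (rule opS_kills[OF a(1)])
  thus ?thesis by simp
qed

lemma repr_bounded: assumes "repr S F W" shows "bounded_op S F"
proof -
  have pr: "pres S W" and eq: "\<And>\<psi>. \<psi> \<in> l2 S \<Longrightarrow> F \<psi> = vf (ap W (Abs_ell2 \<psi>))" using assms by (auto simp: repr_def)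
  have inl2: "F f \<in> l2 S" if "f \<in> l2 S" for f
    using pr Abs_l2_VS[OF that] by (simp add: eq[OF that] vf_l2_iff pres_def)
  show ?thesis unfolding bounded_op_def
  proof (intro conjI ballI allI exI)
    fix f assume "f \<in> l2 S" thus "F f \<in> l2 S" by (rule inl2)
  next
    fix f g a b assume fg: "f \<in> l2 S" "g \<in> l2 S"
    have l: "(\<lambda>x. a * f x) \<in> l2 S" "(\<lambda>x. b * g x) \<in> l2 S" using fg by (auto simp: l2_def sq_summable_scale)
    have s: "(\<lambda>x. a * f x + b * g x) \<in> l2 S" using l by (auto simp: l2_def sq_summable_add)
    show "F (\<lambda>x. a * f x + b * g x) = (\<lambda>x. a * F f x + b * F g x)"
      unfolding eq[OF s] eq[OF fg(1)] eq[OF fg(2)] Abs_add_l2[OF l] Abs_scale_l2[OF fg(1)] Abs_scale_l2[OF fg(2)]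
      by (simp add: ap_add ap_cscale vf_plus vf_cscale)
  next
    fix f assume "f \<in> l2 S"
    have "l2_norm (F f) = norm (ap W (Abs_ell2 f))"
      using l2_norm_eq[OF inl2[OF \<open>f \<in> l2 S\<close>]] eq[OF \<open>f \<in> l2 S\<close>] by (simp add: Abs_vf)
    thus "l2_norm (F f) \<le> norm W * l2_norm f"
      unfolding l2_norm_eq[OF \<open>f \<in> l2 S\<close>] using ap_norm by simp
  qed
qed

lemma repr_comp: assumes "repr S F W" "repr S G V" shows "repr S (F \<circ> G) (W * V)"
  using assms unfolding repr_def
  apply (intro conjI pres_mult, simp_all)
  by (metis Abs_l2_VS Abs_vf ap_mult pres_def vf_l2_iff)

lemma repr_id: "repr S id 1" by (simp add: repr_def pres_one vf_Abs_l2)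

lemma repr_funpow: assumes "repr S F W" shows "repr S (F ^^ k) (W ^ k)"
proof (induction k)
  case 0 thus ?case using repr_id by (simp add: id_def)
next
  case (Suc k)
  have "repr S (F \<circ> F ^^ k) (W * W ^ k)" by (rule repr_comp[OF assms Suc])
  thus ?case by (metis funpow.simps(2) power_Suc)
qed

lemma repr_exp: assumes "repr S F W" shows "repr S (op_exp F) (exp W)"
  unfolding repr_def
proof (intro conjI ballI)
  show "pres S (exp W)" using assms by (simp add: repr_def pres_exp)
  fix \<psi> assume "\<psi> \<in> l2 S"
  have "(F ^^ k) \<psi> = vf (ap (W ^ k) (Abs_ell2 \<psi>))" for k
    using repr_funpow[OF assms, of k] \<open>\<psi> \<in> l2 S\<close> by (simp add: repr_def)
  thus "op_exp F \<psi> = vf (ap (exp W) (Abs_ell2 \<psi>))"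
    unfolding op_exp_def using exp_sums_pointwise[of W "Abs_ell2 \<psi>"] by (simp add: fun_eq_iff sums_iff)
qed

lemma repr_sum:
  assumes "\<And>i. i \<in> I \<Longrightarrow> repr S (F i) (W i)"
  shows "repr S (\<lambda>\<phi> x. \<Sum>i\<in>I. F i \<phi> x) (\<Sum>i\<in>I. W i)"
  using assms unfolding repr_def by (auto intro!: pres_sum simp: ap_sum_op vf_sum)

lemma repr_scale:
  assumes "repr S F W" shows "repr S (\<lambda>\<phi> x. c * F \<phi> x) (cI c * W)"
  using assms unfolding repr_def by (auto intro!: pres_mult pres_cI simp: ap_mult ap_cI vf_cscale)

lemma repr_scalar:
  assumes "scalar_op S F r" shows "repr S F (r *\<^sub>R 1)"
  using assms unfolding repr_def scalar_op_def
  by (auto intro!: pres_scaleR pres_one simp: ap_scaleR_op vf_scaleR vf_Abs_l2)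

lemma repr_foldr:
  assumes "\<And>k. k \<in> set xs \<Longrightarrow> repr S (E k) (Wf k)"
  shows "repr S (foldr (\<circ>) (map E xs) id) (foldr (*) (map Wf xs) 1)"
  using assms by (induction xs) (auto intro: repr_comp repr_id)

lemma repr_unique: "repr S F W \<Longrightarrow> repr S F V \<Longrightarrow> v \<in> VS S \<Longrightarrow> ap W v = ap V v"
  unfolding repr_def by (metis Abs_vf vf_inject vf_l2_iff)

lemma ell2_eqI: "(\<And>x. vf a x = vf b x) \<Longrightarrow> a = b"
  by (metis vf_inject ext)

lemma bop_norm_bound: "(\<And>v. norm (ap W v) \<le> K * norm v) \<Longrightarrow> 0 \<le> K \<Longrightarrow> norm W \<le> K"
  unfolding ap_def norm_bop.rep_eq by (rule norm_blinfun_bound)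

definition slicef :: "(nat \<Rightarrow> nat set) \<Rightarrow> nat \<Rightarrow> (nat \<Rightarrow> nat) \<Rightarrow> (nat \<Rightarrow> nat) ell2 \<Rightarrow> nat \<Rightarrow> complex" where
  "slicef D j x v = (\<lambda>z. if z \<in> D j then vf v (x(j:=z)) else 0)"

lemma inj_upd: "inj_on (\<lambda>z. x(j:=z)) Z"
  by (rule inj_onI) (metis fun_upd_same)

lemma slicef_finite: assumes "finite Z" shows "(\<Sum>z\<in>Z. (cmod (slicef D j x v z))^2) \<le> (norm v)^2"
proof -
  have "(\<Sum>z\<in>Z. (cmod (slicef D j x v z))^2) \<le> (\<Sum>z\<in>Z. (cmod (vf v (x(j:=z))))^2)"
    by (rule sum_mono) (simp add: slicef_def)
  also have "\<dots> = (\<Sum>y\<in>(\<lambda>z. x(j:=z)) ` Z. (cmod (vf v y))^2)"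
    by (simp add: sum.reindex[OF inj_upd] o_def)
  also have "\<dots> \<le> (norm v)^2" using assms by (intro finite_sq_le_norm) simp
  finally show ?thesis .
qed

lemma slicef_summable: "(\<lambda>z. (cmod (slicef D j x v z))^2) summable_on UNIV"
  by (rule sq_summable_from_finite[OF slicef_finite])

definition slice :: "(nat \<Rightarrow> nat set) \<Rightarrow> nat \<Rightarrow> (nat \<Rightarrow> nat) \<Rightarrow> (nat \<Rightarrow> nat) ell2 \<Rightarrow> nat ell2" where
  "slice D j x v = Abs_ell2 (slicef D j x v)"

lemma vf_slice: "vf (slice D j x v) = slicef D j x v"
  unfolding slice_def using slicef_summable by (simp add: Abs_ell2_inverse)

lemma slice_VS: "slice D j x v \<in> VS (D j)"
  by (simp add: VS_def vf_slice slicef_def)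

lemma slice_upd: "slice D j (x(j:=w)) v = slice D j x v"
proof -
  have "\<And>z. x(j:=w, j:=z) = x(j:=z)" by simp
  thus ?thesis unfolding slice_def slicef_def by presburger
qed

lemma slice_add: "slice D j x (v + w) = slice D j x v + slice D j x w"
  by (rule ell2_eqI) (simp add: vf_slice vf_plus slicef_def)
lemma slice_cscale: "slice D j x (cscale c v) = cscale c (slice D j x v)"
  by (rule ell2_eqI) (simp add: vf_slice vf_cscale slicef_def)
lemma slice_scaleR: "slice D j x (r *\<^sub>R v) = r *\<^sub>R slice D j x v"
  by (rule ell2_eqI) (simp add: vf_slice vf_scaleR slicef_def)

lemma has_sum_finite_sum:
  fixes f :: "'r \<Rightarrow> 'z \<Rightarrow> real"
  assumes "finite R" "\<And>r. r \<in> R \<Longrightarrow> f r summable_on A"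
  shows "((\<lambda>z. \<Sum>r\<in>R. f r z) has_sum (\<Sum>r\<in>R. infsum (f r) A)) A"
  using assms
proof (induction R rule: finite_induct)
  case empty thus ?case by simp
next
  case (insert r R)
  have "((\<lambda>z. f r z + (\<Sum>r\<in>R. f r z)) has_sum (infsum (f r) A + (\<Sum>r\<in>R. infsum (f r) A))) A"
    by (rule has_sum_add) (use insert in auto)
  thus ?case using insert by simp
qed

lemma sum_norm_slice:
  assumes "finite R" "\<And>r. r \<in> R \<Longrightarrow> r j = 0"
  shows "(\<Sum>r\<in>R. (norm (slice D j r v))^2) \<le> (norm v)^2"
proof -
  define h where "h r z = (cmod (slicef D j r v z))^2" for r z
  have ns: "(norm (slice D j r v))^2 = infsum (h r) UNIV" for r
    unfolding norm_ell2_sq vf_slice h_def ..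
  have hs: "((\<lambda>z. \<Sum>r\<in>R. h r z) has_sum (\<Sum>r\<in>R. infsum (h r) UNIV)) UNIV"
    by (rule has_sum_finite_sum[OF assms(1)]) (simp add: h_def slicef_summable)
  have "(\<Sum>r\<in>R. infsum (h r) UNIV) \<le> (norm v)^2"
  proof (rule has_sum_le_finite_sums[OF hs])
    fix Z :: "nat set" assume Z: "finite Z" "Z \<subseteq> UNIV"
    have inj: "inj_on (\<lambda>(r, z). r(j:=z)) (R \<times> Z)"
    proof (rule inj_onI, clarify)
      fix r z r' z' assume a: "r \<in> R" "z \<in> Z" "r' \<in> R" "z' \<in> Z" "r(j := z) = r'(j := z')"
      hence "z = z'" by (metis fun_upd_same)
      moreover have "r = r'"
      proof
        fix k
        have e: "(r(j:=z)) k = (r'(j:=z')) k" using a(5) by simp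
        show "r k = r' k"
        proof (cases "k = j")
          case True thus ?thesis using a assms(2)[of r] assms(2)[of r'] by simp
        next
          case False thus ?thesis using e by simp
        qed
      qed
      ultimately show "r = r' \<and> z = z'" by simp
    qed
    have "(\<Sum>z\<in>Z. \<Sum>r\<in>R. h r z) = (\<Sum>r\<in>R. \<Sum>z\<in>Z. h r z)"
      by (rule sum.swap)
    also have "\<dots> = (\<Sum>(r,z)\<in>R \<times> Z. h r z)"
      by (simp add: sum.cartesian_product)
    also have "\<dots> \<le> (\<Sum>(r,z)\<in>R \<times> Z. (cmod (vf v (r(j:=z))))^2)"
      by (rule sum_mono) (auto simp: h_def slicef_def)
    also have "\<dots> = (\<Sum>y\<in>(\<lambda>(r, z). r(j:=z)) ` (R \<times> Z). (cmod (vf v y))^2)"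
      by (rule sym, rule sum.reindex_cong[OF inj]) auto
    also have "\<dots> \<le> (norm v)^2" using assms(1) Z by (intro finite_sq_le_norm) simp
    finally show "(\<Sum>z\<in>Z. \<Sum>r\<in>R. h r z) \<le> (norm v)^2" .
  qed
  thus ?thesis unfolding ns .
qed

definition liftf :: "nat \<Rightarrow> (nat \<Rightarrow> nat set) \<Rightarrow> nat \<Rightarrow> nat bop \<Rightarrow> (nat \<Rightarrow> nat) ell2 \<Rightarrow> (nat \<Rightarrow> nat) \<Rightarrow> complex" where
  "liftf n D j W v = (\<lambda>x. if x \<in> tuples n D then vf (ap W (slice D j x v)) (x j) else 0)"

lemma liftf_finite:
  assumes "finite F"
  shows "(\<Sum>x\<in>F. (cmod (liftf n D j W v x))^2) \<le> (norm W * norm v)^2"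
proof -
  define T where "T = tuples n D"
  define G where "G = F \<inter> T"
  define \<rho> where "\<rho> x = x(j:=0)" for x :: "nat \<Rightarrow> nat"
  define h where "h x = (cmod (vf (ap W (slice D j x v)) (x j)))^2" for x
  have fG: "finite G" using assms by (simp add: G_def)
  have "(\<Sum>x\<in>F. (cmod (liftf n D j W v x))^2) = (\<Sum>x\<in>F. if x \<in> T then h x else 0)"
    by (rule sum.cong) (auto simp: liftf_def T_def h_def)
  also have "\<dots> = sum h G" unfolding G_def using assms by (simp add: sum.inter_restrict)
  also have "\<dots> = (\<Sum>r\<in>\<rho> ` G. sum h {x \<in> G. \<rho> x = r})" using fG by (rule sum.image_gen)
  also have "\<dots> \<le> (\<Sum>r\<in>\<rho> ` G. (norm W)^2 * (norm (slice D j r v))^2)"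
  proof (rule sum_mono)
    fix r assume "r \<in> \<rho> ` G"
    define Gr where "Gr = {x \<in> G. \<rho> x = r}"
    have sl: "slice D j x v = slice D j r v" if "x \<in> Gr" for x
      using that slice_upd[of D j x 0 v] by (simp add: Gr_def \<rho>_def)
    have inj: "inj_on (\<lambda>x. x j) Gr"
    proof (rule inj_onI)
      fix x x' assume a: "x \<in> Gr" "x' \<in> Gr" "x j = x' j"
      show "x = x'"
      proof
        fix k
        have "\<rho> x = \<rho> x'" using a by (simp add: Gr_def)
        thus "x k = x' k" using a(3) unfolding \<rho>_def by (cases "k = j") (auto dest: fun_cong[of _ _ k])
      qed
    qed
    have "sum h Gr = (\<Sum>x\<in>Gr. (cmod (vf (ap W (slice D j r v)) (x j)))^2)"
      by (rule sum.cong) (auto simp: h_def sl)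
    also have "\<dots> = (\<Sum>z\<in>(\<lambda>x. x j) ` Gr. (cmod (vf (ap W (slice D j r v)) z))^2)"
      by (simp add: sum.reindex[OF inj] o_def)
    also have "\<dots> \<le> (norm (ap W (slice D j r v)))^2"
      by (rule finite_sq_le_norm) (simp add: Gr_def fG)
    also have "\<dots> \<le> (norm W * norm (slice D j r v))^2"
      by (rule power_mono[OF ap_norm]) simp
    also have "\<dots> = (norm W)^2 * (norm (slice D j r v))^2" by (simp add: power_mult_distrib)
    finally show "sum h {x \<in> G. \<rho> x = r} \<le> (norm W)^2 * (norm (slice D j r v))^2" unfolding Gr_def .
  qed
  also have "\<dots> = (norm W)^2 * (\<Sum>r\<in>\<rho> ` G. (norm (slice D j r v))^2)" by (simp add: sum_distrib_left)
  also have "\<dots> \<le> (norm W)^2 * (norm v)^2"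
    by (intro mult_left_mono sum_norm_slice) (auto simp: fG \<rho>_def)
  also have "\<dots> = (norm W * norm v)^2" by (simp add: power_mult_distrib)
  finally show ?thesis .
qed

lemma liftf_summable: "(\<lambda>x. (cmod (liftf n D j W v x))^2) summable_on UNIV"
  by (rule sq_summable_from_finite[OF liftf_finite])

lemma vf_Abs_liftf: "vf (Abs_ell2 (liftf n D j W v)) = liftf n D j W v"
  using liftf_summable by (simp add: Abs_ell2_inverse)

definition lift :: "nat \<Rightarrow> (nat \<Rightarrow> nat set) \<Rightarrow> nat \<Rightarrow> nat bop \<Rightarrow> (nat \<Rightarrow> nat) bop" where
  "lift n D j W = mkop (\<lambda>v. Abs_ell2 (liftf n D j W v))"

lemma ap_lift_raw: "ap (lift n D j W) = (\<lambda>v. Abs_ell2 (liftf n D j W v))"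
  unfolding lift_def
proof (rule ap_mkop)
  show "bounded_linear (\<lambda>v. Abs_ell2 (liftf n D j W v))"
  proof (rule bounded_linear_intro[where K="norm W"])
    fix v w :: "(nat \<Rightarrow> nat) ell2" and r :: real
    show "Abs_ell2 (liftf n D j W (v + w)) = Abs_ell2 (liftf n D j W v) + Abs_ell2 (liftf n D j W w)"
      by (rule ell2_eqI) (simp only: vf_Abs_liftf vf_plus, simp add: liftf_def slice_add ap_add vf_plus)
    show "Abs_ell2 (liftf n D j W (r *\<^sub>R v)) = r *\<^sub>R Abs_ell2 (liftf n D j W v)"
      by (rule ell2_eqI) (simp only: vf_Abs_liftf vf_scaleR, simp add: liftf_def slice_scaleR ap_scaleR vf_scaleR)
    show "norm (Abs_ell2 (liftf n D j W v)) \<le> norm v * norm W"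
      by (rule norm_le_from_finite') (auto simp: vf_Abs_liftf liftf_finite mult.commute)
  qed
  show "Abs_ell2 (liftf n D j W (cscale c v)) = cscale c (Abs_ell2 (liftf n D j W v))" for c v
    by (rule ell2_eqI) (simp only: vf_Abs_liftf vf_cscale, simp add: liftf_def slice_cscale ap_cscale vf_cscale)
qed

lemma vf_ap_lift: "vf (ap (lift n D j W) v) = liftf n D j W v"
  by (simp add: ap_lift_raw vf_Abs_liftf)

lemma lift_add: "lift n D j (W + V) = lift n D j W + lift n D j V"
  by (intro bop_eqI ell2_eqI) (simp add: ap_plus_op vf_plus vf_ap_lift liftf_def)
lemma lift_scaleR: "lift n D j (r *\<^sub>R W) = r *\<^sub>R lift n D j W"
  by (intro bop_eqI ell2_eqI) (simp add: ap_scaleR_op vf_scaleR vf_ap_lift liftf_def)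
lemma lift_zero: "lift n D j 0 = 0"
  by (intro bop_eqI ell2_eqI) (simp add: vf_zero vf_ap_lift liftf_def)
lemma lift_cI: "lift n D j (cI c * W) = cI c * lift n D j W"
  by (intro bop_eqI ell2_eqI) (simp add: ap_mult ap_cI vf_cscale vf_ap_lift liftf_def)
lemma lift_sum: "lift n D j (sum f I) = (\<Sum>i\<in>I. lift n D j (f i))"
  by (induction I rule: infinite_finite_induct) (auto simp: lift_zero lift_add)

lemma norm_lift: "norm (lift n D j W) \<le> norm W"
proof (rule bop_norm_bound)
  fix v
  have "norm (ap (lift n D j W) v) \<le> norm W * norm v"
    unfolding ap_lift_raw by (rule norm_le_from_finite') (auto simp: vf_Abs_liftf liftf_finite)
  thus "norm (ap (lift n D j W) v) \<le> norm W * norm v" .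
qed simp

lemma bounded_linear_lift: "bounded_linear (lift n D j)"
  by (rule bounded_linear_intro[where K=1]) (auto simp: lift_add lift_scaleR norm_lift)

lemma tuples_upd: "x \<in> tuples n D \<Longrightarrow> j < n \<Longrightarrow> z \<in> D j \<Longrightarrow> x(j:=z) \<in> tuples n D"
  by (auto simp: tuples_def)

lemma tuples_in: "x \<in> tuples n D \<Longrightarrow> j < n \<Longrightarrow> x j \<in> D j"
  by (auto simp: tuples_def)

lemma lift_VS: "ap (lift n D j W) v \<in> VS (tuples n D)"
  by (simp add: VS_def vf_ap_lift liftf_def)

lemma pres_lift: "pres (tuples n D) (lift n D j W)"
  by (simp add: pres_def lift_VS)

lemma slice_lift:
  assumes "j < n" "x \<in> tuples n D" "pres (D j) V"
  shows "slice D j x (ap (lift n D j V) v) = ap V (slice D j x v)"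
proof (rule ell2_eqI)
  fix z
  have inV: "ap V (slice D j x v) \<in> VS (D j)" using assms(3) slice_VS by (auto simp: pres_def)
  show "vf (slice D j x (ap (lift n D j V) v)) z = vf (ap V (slice D j x v)) z"
  proof (cases "z \<in> D j")
    case True
    thus ?thesis using tuples_upd[OF assms(2,1) True]
      by (simp add: vf_slice slicef_def vf_ap_lift liftf_def slice_upd)
  next
    case False
    thus ?thesis using inV by (simp add: vf_slice slicef_def VS_def)
  qed
qed

lemma lift_mult:
  assumes "j < n" "pres (D j) V"
  shows "lift n D j (W * V) = lift n D j W * lift n D j V"
proof (intro bop_eqI ell2_eqI)
  fix v x
  show "vf (ap (lift n D j (W * V)) v) x = vf (ap (lift n D j W * lift n D j V) v) x"
  proof (cases "x \<in> tuples n D")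
    case True thus ?thesis by (simp add: ap_mult vf_ap_lift liftf_def slice_lift[OF assms(1) True assms(2)])
  next
    case False thus ?thesis by (simp add: ap_mult vf_ap_lift liftf_def)
  qed
qed

lemma lift_one_VS:
  assumes "j < n" "v \<in> VS (tuples n D)"
  shows "ap (lift n D j 1) v = v"
proof (rule ell2_eqI)
  fix x show "vf (ap (lift n D j 1) v) x = vf v x"
    using assms tuples_in[of x n D j] by (auto simp: vf_ap_lift liftf_def vf_slice slicef_def VS_def)
qed

lemma lift_power_VS:
  assumes "j < n" "pres (D j) Z" "v \<in> VS (tuples n D)"
  shows "ap ((lift n D j Z) ^ k) v = ap (lift n D j (Z ^ k)) v"
proof (induction k)
  case 0 thus ?case using lift_one_VS[OF assms(1,3)] by simp
next
  case (Suc k)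
  have "ap ((lift n D j Z) ^ Suc k) v = ap (lift n D j Z) (ap (lift n D j (Z ^ k)) v)"
    by (simp add: ap_mult Suc)
  also have "\<dots> = ap (lift n D j (Z * Z ^ k)) v"
  proof -
    have p: "pres (D j) (Z ^ k)" by (rule pres_power[OF assms(2)])
    show ?thesis by (simp add: lift_mult[where j=j and n=n and D=D and V="Z^k" and W=Z, OF assms(1) p] ap_mult)
  qed
  finally show ?case by simp
qed

lemma lift_exp:
  assumes "j < n" "pres (D j) Z" "v \<in> VS (tuples n D)"
  shows "ap (lift n D j (exp Z)) v = ap (exp (lift n D j Z)) v"
proof (rule ell2_eqI)
  fix x
  have s: "(\<lambda>k. vf (ap (lift n D j (Z ^ k)) v) x / of_nat (fact k)) sums vf (ap (exp (lift n D j Z)) v) x"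
    using exp_sums_pointwise[of "lift n D j Z" v x] by (simp add: lift_power_VS[OF assms])
  show "vf (ap (lift n D j (exp Z)) v) x = vf (ap (exp (lift n D j Z)) v) x"
  proof (cases "x \<in> tuples n D")
    case True
    have "(\<lambda>k. vf (ap (Z ^ k) (slice D j x v)) (x j) / of_nat (fact k)) sums vf (ap (exp Z) (slice D j x v)) (x j)"
      by (rule exp_sums_pointwise)
    thus ?thesis using s True by (simp add: vf_ap_lift liftf_def sums_iff)
  next
    case False
    thus ?thesis using s by (simp add: vf_ap_lift liftf_def sums_iff)
  qed
qed

lemma slice_ket:
  assumes "y \<in> tuples n D" "j < n"
  shows "slice D j y (ket y) = ket (y j)"
proof (rule ell2_eqI)
  fix w
  have "y(j:=w) = y \<longleftrightarrow> w = y j" by (metis fun_upd_same fun_upd_triv)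
  thus "vf (slice D j y (ket y)) w = vf (ket (y j)) w"
    using tuples_in[OF assms] by (auto simp: vf_slice slicef_def vf_ket)
qed

lemma lift_ket:
  assumes "y \<in> tuples n D" "j < n" "z \<in> D j"
  shows "vf (ap (lift n D j W) (ket y)) (y(j:=z)) = vf (ap W (ket (y j))) z"
  using tuples_upd[OF assms(1,2,3)] slice_upd[of D j y z "ket y"]
  by (simp add: vf_ap_lift liftf_def slice_ket[OF assms(1,2)])

definition pv :: "nat \<Rightarrow> (nat \<Rightarrow> nat set) \<Rightarrow> (nat \<Rightarrow> nat ell2) \<Rightarrow> (nat \<Rightarrow> nat) \<Rightarrow> complex" where
  "pv n D f = (\<lambda>x. if x \<in> tuples n D then \<Prod>m<n. vf (f m) (x m) else 0)"

lemma prod_split_at: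
  fixes n :: nat
  assumes "j < n" "\<And>m. m < n \<Longrightarrow> m \<noteq> j \<Longrightarrow> g m = h m" "g j = a"
  shows "(\<Prod>m<n. g m) = a * (\<Prod>m\<in>{..<n}-{j}. h m)"
proof -
  have "(\<Prod>m<n. g m) = g j * (\<Prod>m\<in>{..<n}-{j}. g m)"
    by (rule prod.remove) (use assms(1) in auto)
  hence "(\<Prod>m<n. g m) = a * (\<Prod>m\<in>{..<n}-{j}. g m)" using assms(3) by simp
  also have "(\<Prod>m\<in>{..<n}-{j}. g m) = (\<Prod>m\<in>{..<n}-{j}. h m)"
    by (rule prod.cong) (auto simp: assms(2))
  finally show ?thesis .
qed

lemma lift_pv:
  assumes "j < n" "vf v = pv n D f"
  shows "vf (ap (lift n D j W) v) = pv n D (f(j := ap W (Abs_ell2 (restr (D j) (vf (f j))))))"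
proof (rule ext)
  fix x
  define u where "u = Abs_ell2 (restr (D j) (vf (f j)))"
  have vfu: "vf u = restr (D j) (vf (f j))" unfolding u_def by (rule vf_Abs_l2[OF restr_l2])
  show "vf (ap (lift n D j W) v) x = pv n D (f(j := ap W u)) x"
  proof (cases "x \<in> tuples n D")
    case False thus ?thesis by (simp add: vf_ap_lift liftf_def pv_def)
  next
    case xT: True
    define c where "c = (\<Prod>m\<in>{..<n}-{j}. vf (f m) (x m))"
    have sl: "slice D j x v = cscale c u"
    proof (rule ell2_eqI)
      fix z
      show "vf (slice D j x v) z = vf (cscale c u) z"
      proof (cases "z \<in> D j")
        case False thus ?thesis by (simp add: vf_slice slicef_def vf_cscale vfu restr_def)
      next
        case True
        have xt: "x(j:=z) \<in> tuples n D" by (rule tuples_upd[OF xT assms(1) True])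
        have "(\<Prod>m<n. vf (f m) ((x(j:=z)) m)) = vf (f j) z * c"
          unfolding c_def by (rule prod_split_at[OF assms(1)]) simp_all
        thus ?thesis using True xt by (simp add: vf_slice slicef_def vf_cscale vfu restr_def assms(2) pv_def mult.commute)
      qed
    qed
    have "vf (ap (lift n D j W) v) x = c * vf (ap W u) (x j)"
      using xT by (simp add: vf_ap_lift liftf_def sl ap_cscale vf_cscale)
    also have "\<dots> = vf (ap W u) (x j) * c" by (rule mult.commute)
    also have "\<dots> = (\<Prod>m<n. vf ((f(j := ap W u)) m) (x m))"
      unfolding c_def by (rule prod_split_at[OF assms(1), symmetric]) simp_all
    also have "\<dots> = pv n D (f(j := ap W u)) x" using xT by (simp add: pv_def)
    finally show ?thesis .
  qed
qed

lemma tuples_eq: "x \<in> tuples n D \<Longrightarrow> y \<in> tuples n D \<Longrightarrow> (\<forall>m<n. x m = y m) \<Longrightarrow> x = y"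
  by (auto simp: tuples_def fun_eq_iff) (metis not_le)

lemma ket_pv: assumes "y \<in> tuples n D" shows "vf (ket y) = pv n D (\<lambda>m. ket (y m))"
proof (rule ext)
  fix x
  show "vf (ket y) x = pv n D (\<lambda>m. ket (y m)) x"
  proof (cases "x \<in> tuples n D")
    case False
    hence "x \<noteq> y" using assms by auto
    thus ?thesis using False by (simp add: vf_ket pv_def)
  next
    case True
    show ?thesis
    proof (cases "x = y")
      case True thus ?thesis using assms by (simp add: vf_ket pv_def)
    next
      case False
      then obtain m where m: "m < n" "x m \<noteq> y m" using tuples_eq[OF True assms] by blast
      have "(\<Prod>m<n. vf (ket (y m)) (x m)) = 0"
        by (rule prod_zero) (use m in \<open>auto simp: vf_ket\<close>)
      thus ?thesis using False True by (simp add: vf_ket pv_def)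
    qed
  qed
qed

lemma lift_ket_out:
  assumes "y \<notin> tuples n D" "j < n"
  shows "ap (lift n D j W) (ket y) = 0"
proof (rule ell2_eqI)
  fix x
  have "slice D j x (ket y) = 0" if "x \<in> tuples n D" for x
  proof (rule ell2_eqI)
    fix z
    have "z \<in> D j \<Longrightarrow> x(j:=z) \<noteq> y" using tuples_upd[OF that assms(2)] assms(1) by auto
    thus "vf (slice D j x (ket y)) z = vf 0 z" by (auto simp: vf_slice slicef_def vf_ket vf_zero)
  qed
  thus "vf (ap (lift n D j W) (ket y)) x = vf 0 x" by (simp add: vf_ap_lift liftf_def vf_zero)
qed

lemma restr_ket: "y \<in> S \<Longrightarrow> Abs_ell2 (restr S (vf (ket y))) = ket y"
  by (metis restr_VS VS_ket Abs_vf)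

lemma lift_commute:
  assumes "i < n" "j < n" "i \<noteq> j"
  shows "lift n D i W * lift n D j V = lift n D j V * lift n D i W"
proof (rule bop_eq_ket)
  fix y
  show "ap (lift n D i W * lift n D j V) (ket y) = ap (lift n D j V * lift n D i W) (ket y)"
  proof (cases "y \<in> tuples n D")
    case False thus ?thesis using assms by (simp add: ap_mult lift_ket_out)
  next
    case True
    have yi: "y i \<in> D i" and yj: "y j \<in> D j" using True assms tuples_in by auto
    define f where "f = (\<lambda>m. ket (y m))"
    have k: "vf (ket y) = pv n D f" unfolding f_def by (rule ket_pv[OF True])
    have 1: "vf (ap (lift n D i W * lift n D j V) (ket y)) = pv n D (f(j := ap V (ket (y j)), i := ap W (ket (y i))))"
      unfolding ap_mult
      by (subst lift_pv[OF assms(1) lift_pv[OF assms(2) k]]) (use assms yi yj in \<open>simp add: f_def restr_ket\<close>)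
    have 2: "vf (ap (lift n D j V * lift n D i W) (ket y)) = pv n D (f(i := ap W (ket (y i)), j := ap V (ket (y j))))"
      unfolding ap_mult
      by (subst lift_pv[OF assms(2) lift_pv[OF assms(1) k]]) (use assms yi yj in \<open>simp add: f_def restr_ket\<close>)
    show ?thesis using 1 2 assms(3) by (simp add: vf_inject[symmetric] fun_upd_twist)
  qed
qed

lemma pres_foldr: "(\<And>x. x \<in> set xs \<Longrightarrow> pres S (f x)) \<Longrightarrow> pres S (foldr (*) (map f xs) 1)"
  by (induction xs) (auto intro: pres_mult pres_one)

lemma foldr_lift_ket:
  assumes "distinct xs" "set xs \<subseteq> {..<n}" "y \<in> tuples n D"
  shows "vf (ap (foldr (*) (map (\<lambda>j. lift n D j (Wb j)) xs) 1) (ket y))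
         = pv n D (\<lambda>m. if m \<in> set xs then ap (Wb m) (ket (y m)) else ket (y m))"
  using assms(1,2)
proof (induction xs)
  case Nil thus ?case using ket_pv[OF assms(3)] by simp
next
  case (Cons a xs)
  have a: "a < n" "a \<notin> set xs" using Cons.prems by auto
  have ya: "y a \<in> D a" using tuples_in[OF assms(3) a(1)] .
  have IH: "vf (ap (foldr (*) (map (\<lambda>j. lift n D j (Wb j)) xs) 1) (ket y))
         = pv n D (\<lambda>m. if m \<in> set xs then ap (Wb m) (ket (y m)) else ket (y m))"
    using Cons by auto
  have "vf (ap (foldr (*) (map (\<lambda>j. lift n D j (Wb j)) (a # xs)) 1) (ket y))
      = pv n D ((\<lambda>m. if m \<in> set xs then ap (Wb m) (ket (y m)) else ket (y m))
          (a := ap (Wb a) (Abs_ell2 (restr (D a) (vf (if a \<in> set xs then ap (Wb a) (ket (y a)) else ket (y a)))))))"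
    by (simp add: ap_mult lift_pv[OF a(1) IH])
  also have "\<dots> = pv n D (\<lambda>m. if m \<in> set (a # xs) then ap (Wb m) (ket (y m)) else ket (y m))"
    using a ya by (intro arg_cong[where f="pv n D"]) (auto simp: restr_ket fun_eq_iff)
  finally show ?case .
qed

lemma Abs_basis: "Abs_ell2 (basis y) = ket y"
  by (metis ket.rep_eq vf_inverse)

lemma basis_l2: "y \<in> S \<Longrightarrow> basis y \<in> l2 S"
  using sum_basis_summable[of y] by (auto simp: l2_def basis_def)

lemma tensor_repr:
  assumes "\<And>j. j < n \<Longrightarrow> repr (D j) (B j) (Wb j)"
  shows "repr (tuples n D) (tensor_op n D B) (foldr (*) (map (\<lambda>j. lift n D j (Wb j)) [0..<n]) 1)"
  unfolding repr_def
proof (intro conjI ballI)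
  define Wt where "Wt = foldr (*) (map (\<lambda>j. lift n D j (Wb j)) [0..<n]) 1"
  show "pres (tuples n D) (foldr (*) (map (\<lambda>j. lift n D j (Wb j)) [0..<n]) 1)"
    by (rule pres_foldr) (rule pres_lift)
  fix \<psi> assume psi: "\<psi> \<in> l2 (tuples n D)"
  have Wk: "vf (ap Wt (ket y)) x = (if x \<in> tuples n D then \<Prod>m<n. B m (basis (y m)) (x m) else 0)"
    if "y \<in> tuples n D" for y x
  proof -
    have bm: "vf (ap (Wb m) (ket (y m))) = B m (basis (y m))" if "m < n" for m
      using assms[OF that] basis_l2[OF tuples_in[OF \<open>y \<in> _\<close> that]] unfolding repr_def
      by (simp add: Abs_basis)
    have "vf (ap Wt (ket y)) x = pv n D (\<lambda>m. if m \<in> set [0..<n] then ap (Wb m) (ket (y m)) else ket (y m)) x"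
      unfolding Wt_def by (subst foldr_lift_ket) (use that in auto)
    also have "\<dots> = (if x \<in> tuples n D then \<Prod>m<n. B m (basis (y m)) (x m) else 0)"
      by (simp add: pv_def bm)
    finally show ?thesis .
  qed
  have ps: "\<psi> y = 0" if "y \<notin> tuples n D" for y using psi that by (simp add: l2_def)
  show "tensor_op n D B \<psi> = vf (ap (foldr (*) (map (\<lambda>j. lift n D j (Wb j)) [0..<n]) 1) (Abs_ell2 \<psi>))"
    unfolding Wt_def[symmetric]
  proof (rule ext)
    fix x
    have mr: "((\<lambda>y. \<psi> y * vf (ap Wt (ket y)) x) has_sum vf (ap Wt (Abs_ell2 \<psi>)) x) UNIV"
      using matrix_rep[of "Abs_ell2 \<psi>" Wt x] by (simp add: vf_Abs_l2[OF psi])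
    have mr2: "((\<lambda>y. \<psi> y * vf (ap Wt (ket y)) x) has_sum vf (ap Wt (Abs_ell2 \<psi>)) x) (tuples n D)"
      using mr by (subst has_sum_cong_neutral[where T=UNIV]) (auto simp: ps)
    show "tensor_op n D B \<psi> x = vf (ap Wt (Abs_ell2 \<psi>)) x"
    proof (cases "x \<in> tuples n D")
      case True
      have "((\<lambda>y. (\<Prod>j<n. B j (basis (y j)) (x j)) * \<psi> y) has_sum vf (ap Wt (Abs_ell2 \<psi>)) x) (tuples n D)"
        using mr2 by (rule has_sum_cong[THEN iffD1, rotated]) (simp add: Wk True mult.commute)
      thus ?thesis using True by (simp add: tensor_op_def infsumI)
    next
      case False
      have "((\<lambda>y. 0) has_sum vf (ap Wt (Abs_ell2 \<psi>)) x) (tuples n D)"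
        using mr2 by (rule has_sum_cong[THEN iffD1, rotated]) (simp add: Wk False)
      hence "vf (ap Wt (Abs_ell2 \<psi>)) x = 0" using has_sum_unique has_sum_0_simp by metis
      thus ?thesis using False by (simp add: tensor_op_def)
    qed
  qed
qed

lemma commute_sum_list:
  fixes a :: "'a::ring"
  assumes "\<And>b. b \<in> set xs \<Longrightarrow> a * f b = f b * a"
  shows "a * sum_list (map f xs) = sum_list (map f xs) * a"
  using assms by (induction xs) (auto simp: distrib_left distrib_right)

lemma foldr_exp:
  fixes f :: "'b \<Rightarrow> 'a::{real_normed_algebra_1, banach}"
  assumes "\<And>a b. a \<in> set xs \<Longrightarrow> b \<in> set xs \<Longrightarrow> f a * f b = f b * f a"
  shows "foldr (*) (map (\<lambda>k. exp (f k)) xs) 1 = exp (sum_list (map f xs))"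
  using assms
proof (induction xs)
  case Nil thus ?case by simp
next
  case (Cons a xs)
  have c: "f a * sum_list (map f xs) = sum_list (map f xs) * f a"
    by (rule commute_sum_list) (use Cons.prems in auto)
  have "foldr (*) (map (\<lambda>k. exp (f k)) (a # xs)) 1 = exp (f a) * exp (sum_list (map f xs))"
    using Cons by simp
  also have "\<dots> = exp (f a + sum_list (map f xs))" by (rule exp_add_commuting[OF c, symmetric])
  finally show ?case by simp
qed

lemma ap_power_VS_cong:
  assumes "pres S W" "\<And>v. v \<in> VS S \<Longrightarrow> ap W v = ap W' v" "v \<in> VS S"
  shows "ap (W ^ k) v = ap (W' ^ k) v"
proof (induction k)
  case 0 thus ?case by simp
next
  case (Suc k)
  have "ap (W ^ k) v \<in> VS S" using pres_power[OF assms(1)] assms(3) by (auto simp: pres_def)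
  thus ?case using Suc assms(2) by (simp add: ap_mult)
qed

lemma exp_cong_VS:
  assumes "pres S W" "\<And>v. v \<in> VS S \<Longrightarrow> ap W v = ap W' v" "v \<in> VS S"
  shows "ap (exp W) v = ap (exp W') v"
proof (rule ell2_eqI)
  fix x
  have "(\<lambda>k. vf (ap (W ^ k) v) x / of_nat (fact k)) sums vf (ap (exp W) v) x" by (rule exp_sums_pointwise)
  moreover have "(\<lambda>k. vf (ap (W ^ k) v) x / of_nat (fact k)) sums vf (ap (exp W') v) x"
    using exp_sums_pointwise[of W' v x] by (simp add: ap_power_VS_cong[OF assms])
  ultimately show "vf (ap (exp W) v) x = vf (ap (exp W') v) x" by (rule sums_unique2)
qed

lemma cI_zero: "cI 0 = 0"
  by (rule bop_eqI) (simp add: ap_cI cscale_def zero_ell2_def)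

lemma cI_power: "ap (cI z ^ k) v = cscale (z ^ k) v"
  by (induction k) (auto simp: ap_mult ap_cI cscale_cscale)

lemma exp_cI: "ap (exp (cI z)) v = cscale (exp z) v"
proof (rule ell2_eqI)
  fix x
  have "(\<lambda>k. vf (ap (cI z ^ k) v) x / of_nat (fact k)) sums vf (ap (exp (cI z)) v) x" by (rule exp_sums_pointwise)
  hence a: "(\<lambda>k. z ^ k / of_nat (fact k) * vf v x) sums vf (ap (exp (cI z)) v) x"
    by (simp add: cI_power vf_cscale)
  have "(\<lambda>k. z ^ k /\<^sub>R fact k) sums exp z" by (rule exp_converges)
  hence "(\<lambda>k. z ^ k / of_nat (fact k)) sums exp z" by (simp add: scaleR_conv_of_real divide_inverse mult.commute)
  hence "(\<lambda>k. z ^ k / of_nat (fact k) * vf v x) sums (exp z * vf v x)" by (rule sums_mult2)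
  thus "vf (ap (exp (cI z)) v) x = vf (cscale (exp z) v) x" using a by (simp add: vf_cscale sums_unique2)
qed

lemma foldr_ap_cong:
  assumes "\<And>j. j \<in> set xs \<Longrightarrow> pres S (F j)"
    "\<And>j w. j \<in> set xs \<Longrightarrow> w \<in> VS S \<Longrightarrow> ap (F j) w = ap (G j) w" "v \<in> VS S"
  shows "ap (foldr (*) (map F xs) 1) v = ap (foldr (*) (map G xs) 1) v"
  using assms
proof (induction xs)
  case Nil thus ?case by simp
next
  case (Cons a xs)
  have "ap (foldr (*) (map F xs) 1) v \<in> VS S"
    using pres_foldr[of xs S F] Cons.prems by (auto simp: pres_def)
  thus ?case using Cons by (simp add: ap_mult)
qed

lemma lift_scalar_VS:
  assumes "m < n" "v \<in> VS (tuples n D)"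
  shows "ap (lift n D m (r *\<^sub>R 1)) v = r *\<^sub>R v"
  by (simp add: lift_scaleR ap_scaleR_op lift_one_VS[OF assms])

lemma foldr_lift_scalar:
  assumes "distinct xs" "set xs \<subseteq> {..<n}" "v \<in> VS (tuples n D)"
    "\<And>m. m \<in> set xs \<Longrightarrow> m \<noteq> j \<Longrightarrow> W m = lam m *\<^sub>R 1"
  shows "ap (foldr (*) (map (\<lambda>m. lift n D m (W m)) xs) 1) v
       = (\<Prod>m\<in>set xs - {j}. lam m) *\<^sub>R (if j \<in> set xs then ap (lift n D j (W j)) v else v)"
  using assms(1,2,4)
proof (induction xs)
  case Nil thus ?case by simp
next
  case (Cons a xs)
  have a: "a < n" "a \<notin> set xs" using Cons.prems by auto
  have IH: "ap (foldr (*) (map (\<lambda>m. lift n D m (W m)) xs) 1) v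
       = (\<Prod>m\<in>set xs - {j}. lam m) *\<^sub>R (if j \<in> set xs then ap (lift n D j (W j)) v else v)"
    using Cons by auto
  have inV: "(if j \<in> set xs then ap (lift n D j (W j)) v else v) \<in> VS (tuples n D)"
    using assms(3) lift_VS by auto
  show ?case
  proof (cases "a = j")
    case True
    have "set (a # xs) - {j} = set xs - {j}" using True by auto
    thus ?thesis using True a IH by (simp add: ap_mult ap_scaleR)
  next
    case False
    have s: "insert a (set xs) - {j} = insert a (set xs - {j})" using False by auto
    have p: "(\<Prod>m\<in>insert a (set xs) - {j}. lam m) = lam a * (\<Prod>m\<in>set xs - {j}. lam m)"
      unfolding s using a(2) by (simp add: prod.insert)
    have "ap (foldr (*) (map (\<lambda>m. lift n D m (W m)) (a # xs)) 1) v
        = ap (lift n D a (lam a *\<^sub>R 1)) ((\<Prod>m\<in>set xs - {j}. lam m) *\<^sub>R (if j \<in> set xs then ap (lift n D j (W j)) v else v))"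
      using Cons.prems(3)[of a] False IH by (simp add: ap_mult)
    also have "\<dots> = lam a *\<^sub>R ((\<Prod>m\<in>set xs - {j}. lam m) *\<^sub>R (if j \<in> set xs then ap (lift n D j (W j)) v else v))"
      by (rule lift_scalar_VS[OF a(1) VS_scaleR[OF inV]])
    also have "\<dots> = (\<Prod>m\<in>set (a # xs) - {j}. lam m) *\<^sub>R (if j \<in> set (a # xs) then ap (lift n D j (W j)) v else v)"
      using False a by (simp add: p)
    finally show ?thesis .
  qed
qed

lemma opS_VS: "bounded_op S F \<Longrightarrow> ap (opS S F) v \<in> VS S"
  by (simp add: ap_opS Abs_l2_VS[OF bounded_op_l2[OF _ restr_l2]])

lemma pres_opS: "bounded_op S F \<Longrightarrow> pres S (opS S F)"
  by (simp add: pres_def opS_VS)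

lemma repr_ap: "repr S F W \<Longrightarrow> \<psi> \<in> l2 S \<Longrightarrow> Abs_ell2 (F \<psi>) = ap W (Abs_ell2 \<psi>)"
  by (simp add: repr_def Abs_vf)

lemma sum_list_map_upt: "sum_list (map f [0..<N]) = (\<Sum>k<N. f k)"
  by (simp add: sum_set_upt_conv_sum_list_nat[symmetric] atLeast0LessThan)

lemma pres_sum_list: "(\<And>x. x \<in> set xs \<Longrightarrow> pres S (f x)) \<Longrightarrow> pres S (sum_list (map f xs))"
  by (induction xs) (auto intro: pres_add pres_zero)

lemma cscale_sum_right: "cscale c (sum f I) = (\<Sum>i\<in>I. cscale c (f i))"
  by (induction I rule: infinite_finite_induct) (auto simp: cscale_add)

lemma cscale_sum_left: "cscale (sum f I) v = (\<Sum>i\<in>I. cscale (f i) v)"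
  by (rule ell2_eqI) (simp add: vf_cscale vf_sum sum_distrib_right)

lemma cscale_zero_left[simp]: "cscale 0 v = 0"
  by (rule ell2_eqI) (simp add: vf_cscale vf_zero)

lemma VS_empty: "v \<in> VS {} \<Longrightarrow> v = 0"
  by (rule ell2_eqI) (simp add: VS_def vf_zero)

lemma cmod_exp_imag: "cmod (exp (- \<i> * complex_of_real t * complex_of_real s)) = 1"
proof -
  have "- \<i> * complex_of_real t * complex_of_real s = \<i> * complex_of_real (- (t * s))" by simp
  thus ?thesis by (simp only: norm_exp_i_times)
qed

lemma card_le1_other:
  fixes n :: nat
  assumes "card {j. j < n \<and> P j} \<le> 1" "a < n" "P a" "b < n" "P b"
  shows "a = b"
proof -
  have f: "finite {j. j < n \<and> P j}" by simp
  from assms(1) have "card {j. j < n \<and> P j} \<le> Suc 0" by simp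
  hence "\<forall>a1\<in>{j. j < n \<and> P j}. \<forall>a2\<in>{j. j < n \<and> P j}. a1 = a2" using card_le_Suc0_iff_eq[OF f] by simp
  thus ?thesis using assms(2-5) by simp
qed

theorem theorem2p5:
  fixes n NH :: nat and D :: "nat \<Rightarrow> nat set" and t :: real
    and A :: "nat \<Rightarrow> nat \<Rightarrow> (nat \<Rightarrow> complex) \<Rightarrow> (nat \<Rightarrow> complex)"
  assumes "n \<ge> 1" and "NH \<ge> 1"
    and sa: "\<forall>i<NH. \<forall>j<n. self_adjoint_op (D j) (A i j)"
    and comm: "\<forall>k<NH. \<forall>l<NH. \<forall>\<psi>\<in>l2 (tuples n D).
                 tensor_op n D (A k) (tensor_op n D (A l) \<psi>) = tensor_op n D (A l) (tensor_op n D (A k) \<psi>)"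
    and one: "\<forall>i<NH. card {j. j < n \<and> \<not> real_scalar_op (D j) (A i j)} \<le> 1"
  shows "\<exists>c::complex. cmod c = 1 \<and>
    (\<forall>\<psi>\<in>l2 (tuples n D).
       op_exp (\<lambda>\<phi> x. - \<i> * complex_of_real t * (\<Sum>i<NH. tensor_op n D (A i) \<phi> x)) \<psi>
       = (\<lambda>x. c * tensor_op n D (U_factor n D t NH A) \<psi> x))"
proof -
  define T where "T = tuples n D"
  define rs where "rs k j \<longleftrightarrow> real_scalar_op (D j) (A k j)" for k j
  define lam where "lam k m = scal (D m) (A k m)" for k m
  have bo: "bounded_op (D j) (A k j)" if "k < NH" "j < n" for k j
    using sa that by (simp add: self_adjoint_op_def)
  have sc: "scalar_op (D j) (A k j) (lam k j)" if "rs k j" for k j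
    using that unfolding rs_def real_scalar_op_def lam_def scal_def by (rule someI_ex)
  define jk where "jk k = (if \<exists>j<n. \<not> rs k j then (SOME j. j < n \<and> \<not> rs k j) else n)" for k
  have jk2: "jk k < n \<and> \<not> rs k (jk k)" if "jk k \<noteq> n" for k
  proof -
    have e: "\<exists>j<n. \<not> rs k j" using that by (auto simp: jk_def split: if_splits)
    hence "jk k = (SOME j. j < n \<and> \<not> rs k j)" by (simp add: jk_def)
    thus ?thesis using someI_ex[of "\<lambda>j. j < n \<and> \<not> rs k j"] e by auto
  qed
  have jk3: "rs k m" if "k < NH" "m < n" "m \<noteq> jk k" for k m
  proof (rule ccontr)
    assume nr: "\<not> rs k m"
    have e: "\<exists>j<n. \<not> rs k j" using nr that(2) by auto
    hence "jk k = (SOME j. j < n \<and> \<not> rs k j)" by (simp add: jk_def)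
    hence "jk k < n" using someI_ex[of "\<lambda>j. j < n \<and> \<not> rs k j"] e by auto
    hence "jk k \<noteq> n" by simp
    hence "jk k < n" "\<not> rs k (jk k)" using jk2 by auto
    hence "m = jk k" using card_le1_other[of n "\<lambda>j. \<not> real_scalar_op (D j) (A k j)" m "jk k"] one that nr
      by (auto simp: rs_def)
    thus False using that(3) by simp
  qed
  have jkle: "jk k \<le> n" for k using jk2[of k] by (cases "jk k = n") auto
  have dl: "delta n D (A k) j = 0" if "k < NH" "j < n" "j \<noteq> jk k" for k j
    using jk3[OF that] by (simp add: delta_def rs_def)
  have dl2: "delta n D (A k) (jk k) = (\<Prod>m\<in>{..<n}-{jk k}. lam k m)" if "jk k < n" for k
    using jk2[of k] that by (simp add: delta_def rs_def lam_def)

  define Ab where "Ab k j = opS (D j) (A k j)" for k j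
  define Wb where "Wb k j = (if rs k j then lam k j *\<^sub>R 1 else Ab k j)" for k j
  have reprWb: "repr (D j) (A k j) (Wb k j)" if "k < NH" "j < n" for k j
    using repr_scalar[OF sc] repr_opS[OF bo[OF that]] by (simp add: Wb_def Ab_def)
  define Tb where "Tb k = foldr (*) (map (\<lambda>j. lift n D j (Wb k j)) [0..<n]) 1" for k
  have reprT: "repr T (tensor_op n D (A k)) (Tb k)" if "k < NH" for k
    unfolding T_def Tb_def by (rule tensor_repr) (rule reprWb[OF that])
  have Tb_eq: "ap (Tb k) v = (\<Prod>m\<in>{..<n}-{jk k}. lam k m) *\<^sub>R
                 (if jk k < n then ap (lift n D (jk k) (Ab k (jk k))) v else v)"
    if "k < NH" "v \<in> VS T" for k v
  proof -
    have "ap (Tb k) v = (\<Prod>m\<in>set [0..<n] - {jk k}. lam k m) *\<^sub>R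
                 (if jk k \<in> set [0..<n] then ap (lift n D (jk k) (Wb k (jk k))) v else v)"
      unfolding Tb_def
      by (rule foldr_lift_scalar) (use that jk3 in \<open>auto simp: T_def Wb_def\<close>)
    moreover have "jk k < n \<Longrightarrow> Wb k (jk k) = Ab k (jk k)" using jk2[of k] by (simp add: Wb_def)
    ultimately show ?thesis by (simp add: atLeast0LessThan lessThan_def)
  qed
  have bT: "bounded_op T (tensor_op n D (A k))" if "k < NH" for k
    by (rule repr_bounded[OF reprT[OF that]])

  define Xb where "Xb = cI (- \<i> * complex_of_real t) * (\<Sum>i<NH. Tb i)"
  have reprX: "repr T (\<lambda>\<phi> x. - \<i> * complex_of_real t * (\<Sum>i<NH. tensor_op n D (A i) \<phi> x)) Xb"
    unfolding Xb_def by (intro repr_scale repr_sum reprT) simp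
  define Y where "Y k j = cI (- \<i> * complex_of_real t * complex_of_real (delta n D (A k) j)) * Ab k j" for k j
  define Ub where "Ub j = foldr (*) (map (\<lambda>k. exp (Y k j)) [0..<NH]) 1" for j
  have reprU: "repr (D j) (U_factor n D t NH A j) (Ub j)" if "j < n" for j
    unfolding U_factor_def Ub_def Y_def Ab_def
    by (intro repr_foldr repr_exp repr_scale repr_opS bo) (use that in auto)
  define Ut where "Ut = foldr (*) (map (\<lambda>j. lift n D j (Ub j)) [0..<n]) 1"
  have reprUt: "repr T (tensor_op n D (U_factor n D t NH A)) Ut"
    unfolding T_def Ut_def by (rule tensor_repr) (rule reprU)

  define sk where "sk k = (if jk k = n then (\<Prod>m<n. lam k m) else 0)" for k
  define \<sigma> where "\<sigma> = (\<Sum>k<NH. sk k)"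
  define c where "c = exp (- \<i> * complex_of_real t * complex_of_real \<sigma>)"
  have cm: "cmod c = 1" unfolding c_def by (rule cmod_exp_imag)

  have key: "ap (exp Xb) v = cscale c (ap Ut v)" if v: "v \<in> VS T" for v
  proof (cases "T = {}")
    case True
    hence "v = 0" using v VS_empty by simp
    thus ?thesis by simp
  next
    case False
    then obtain x0 where x0: "x0 \<in> T" by blast
    have pAb: "pres (D j) (Ab k j)" if "k < NH" "j < n" for k j
      unfolding Ab_def by (rule pres_opS[OF bo[OF that]])
    have jk_of: "jk k = j" if "k < NH" "j < n" "delta n D (A k) j \<noteq> 0" for k j
    proof (rule ccontr)
      assume "jk k \<noteq> j" hence "j \<noteq> jk k" by simp
      thus False using dl[OF that(1,2)] that(3) by simp
    qed
    have AC: "Ab k j * Ab l j = Ab l j * Ab k j"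
      if kl: "k < NH" "l < NH" "j < n" "delta n D (A k) j \<noteq> 0" "delta n D (A l) j \<noteq> 0" for k l j
    proof -
      have jkk: "jk k = j" by (rule jk_of[OF kl(1,3,4)])
      have jkl: "jk l = j" by (rule jk_of[OF kl(2,3,5)])
      define dk where "dk = (\<Prod>m\<in>{..<n}-{j}. lam k m)"
      define dL where "dL = (\<Prod>m\<in>{..<n}-{j}. lam l m)"
      have dk: "dk \<noteq> 0" using kl(4) dl2[of k] jkk kl(3) by (simp add: dk_def)
      have dL: "dL \<noteq> 0" using kl(5) dl2[of l] jkl kl(3) by (simp add: dL_def)
      have TbK: "ap (Tb k) w = dk *\<^sub>R ap (lift n D j (Ab k j)) w" if "w \<in> VS T" for w
        using Tb_eq[OF kl(1) that] jkk kl(3) by (simp add: dk_def)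
      have TbL: "ap (Tb l) w = dL *\<^sub>R ap (lift n D j (Ab l j)) w" if "w \<in> VS T" for w
        using Tb_eq[OF kl(2) that] jkl kl(3) by (simp add: dL_def)
      have eqy: "ap (lift n D j (Ab k j * Ab l j)) (ket y) = ap (lift n D j (Ab l j * Ab k j)) (ket y)"
        if y: "y \<in> T" for y
      proof -
        have b: "basis y \<in> l2 T" using y by (rule basis_l2)
        have "tensor_op n D (A k) (tensor_op n D (A l) (basis y)) = tensor_op n D (A l) (tensor_op n D (A k) (basis y))"
          using comm kl(1,2) b by (simp add: T_def)
        hence e: "Abs_ell2 (tensor_op n D (A k) (tensor_op n D (A l) (basis y))) = Abs_ell2 (tensor_op n D (A l) (tensor_op n D (A k) (basis y)))"
          by simp
        have e1: "Abs_ell2 (tensor_op n D (A k) (tensor_op n D (A l) (basis y))) = ap (Tb k) (ap (Tb l) (ket y))"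
          using repr_ap[OF reprT[OF kl(1)] bounded_op_l2[OF bT[OF kl(2)] b]] repr_ap[OF reprT[OF kl(2)] b]
          by (simp add: Abs_basis)
        have e2: "Abs_ell2 (tensor_op n D (A l) (tensor_op n D (A k) (basis y))) = ap (Tb l) (ap (Tb k) (ket y))"
          using repr_ap[OF reprT[OF kl(2)] bounded_op_l2[OF bT[OF kl(1)] b]] repr_ap[OF reprT[OF kl(1)] b]
          by (simp add: Abs_basis)
        have kV: "ket y \<in> VS T" using y by (rule VS_ket)
        have lV: "ap (lift n D j W) u \<in> VS T" for W u unfolding T_def by (rule lift_VS)
        have "ap (Tb k) (ap (Tb l) (ket y)) = (dk * dL) *\<^sub>R ap (lift n D j (Ab k j)) (ap (lift n D j (Ab l j)) (ket y))"
          using TbK TbL kV lV VS_scaleR by (simp add: ap_scaleR)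
        moreover have "ap (Tb l) (ap (Tb k) (ket y)) = (dk * dL) *\<^sub>R ap (lift n D j (Ab l j)) (ap (lift n D j (Ab k j)) (ket y))"
          using TbK TbL kV lV VS_scaleR by (simp add: ap_scaleR mult.commute)
        ultimately have "(dk * dL) *\<^sub>R ap (lift n D j (Ab k j)) (ap (lift n D j (Ab l j)) (ket y))
                       = (dk * dL) *\<^sub>R ap (lift n D j (Ab l j)) (ap (lift n D j (Ab k j)) (ket y))"
          using e e1 e2 by simp
        hence "ap (lift n D j (Ab k j)) (ap (lift n D j (Ab l j)) (ket y)) = ap (lift n D j (Ab l j)) (ap (lift n D j (Ab k j)) (ket y))"
          using dk dL by simp
        thus ?thesis
          using lift_mult[where n=n and D=D and j=j and V="Ab l j" and W="Ab k j", OF kl(3) pAb[OF kl(2,3)]]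
                lift_mult[where n=n and D=D and j=j and V="Ab k j" and W="Ab l j", OF kl(3) pAb[OF kl(1,3)]]
          by (simp add: ap_mult)
      qed
      show ?thesis
      proof (rule bop_eq_ket)
        fix w
        show "ap (Ab k j * Ab l j) (ket w) = ap (Ab l j * Ab k j) (ket w)"
        proof (cases "w \<in> D j")
          case False
          thus ?thesis using opS_ket_out[OF bo[OF kl(1,3)] False] opS_ket_out[OF bo[OF kl(2,3)] False]
            by (simp add: Ab_def ap_mult)
        next
          case True
          define y where "y = x0(j:=w)"
          have yT: "y \<in> tuples n D" using tuples_upd[OF x0[unfolded T_def] kl(3) True] by (simp add: y_def)
          have yj: "y j = w" by (simp add: y_def)
          show ?thesis
          proof (rule ell2_eqI)
            fix z
            show "vf (ap (Ab k j * Ab l j) (ket w)) z = vf (ap (Ab l j * Ab k j) (ket w)) z"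
            proof (cases "z \<in> D j")
              case True
              have "vf (ap (lift n D j (Ab k j * Ab l j)) (ket y)) (y(j:=z)) = vf (ap (lift n D j (Ab l j * Ab k j)) (ket y)) (y(j:=z))"
                using eqy[OF yT[folded T_def]] by simp
              thus ?thesis using lift_ket[OF yT kl(3) True] yj by simp
            next
              case False
              have "ap (Ab k j * Ab l j) (ket w) \<in> VS (D j)" "ap (Ab l j * Ab k j) (ket w) \<in> VS (D j)"
                by (simp_all add: ap_mult Ab_def opS_VS bo kl)
              thus ?thesis using False by (simp add: VS_def)
            qed
          qed
        qed
      qed
    qed
    have YC: "Y k j * Y l j = Y l j * Y k j" if kl: "k < NH" "l < NH" "j < n" for k l j
    proof (cases "delta n D (A k) j = 0 \<or> delta n D (A l) j = 0")
      case True thus ?thesis by (auto simp: Y_def cI_zero)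
    next
      case False
      hence ac: "Ab k j * Ab l j = Ab l j * Ab k j" using AC[OF kl] by simp
      show ?thesis
      proof (rule bop_eqI)
        fix w
        have "ap (Ab k j) (ap (Ab l j) w) = ap (Ab l j) (ap (Ab k j) w)" using ac by (metis ap_mult)
        thus "ap (Y k j * Y l j) w = ap (Y l j * Y k j) w"
          by (simp add: Y_def ap_mult ap_cI ap_cscale cscale_cscale mult.commute)
      qed
    qed
    define Z where "Z j = sum_list (map (\<lambda>k. Y k j) [0..<NH])" for j
    have UbZ: "Ub j = exp (Z j)" if "j < n" for j
      unfolding Ub_def Z_def by (rule foldr_exp) (use YC that in auto)
    have pY: "pres (D j) (Y k j)" if "k < NH" "j < n" for k j
      unfolding Y_def by (intro pres_mult pres_cI pAb that)
    have pZ: "pres (D j) (Z j)" if "j < n" for j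
      unfolding Z_def by (rule pres_sum_list) (use pY that in auto)
    define R where "R = sum_list (map (\<lambda>j. lift n D j (Z j)) [0..<n])"
    have Ut_R: "ap Ut w = ap (exp R) w" if w: "w \<in> VS T" for w
    proof -
      have "ap Ut w = ap (foldr (*) (map (\<lambda>j. exp (lift n D j (Z j))) [0..<n]) 1) w"
        unfolding Ut_def
      proof (rule foldr_ap_cong[where S=T])
        fix j assume "j \<in> set [0..<n]"
        hence j: "j < n" by simp
        show "pres T (lift n D j (Ub j))" unfolding T_def by (rule pres_lift)
        fix u assume "u \<in> VS T"
        thus "ap (lift n D j (Ub j)) u = ap (exp (lift n D j (Z j))) u"
          unfolding UbZ[OF j] T_def by (rule lift_exp[where n=n and D=D and j=j and Z="Z j", OF j pZ[OF j]])
      qed (rule w)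
      also have "foldr (*) (map (\<lambda>j. exp (lift n D j (Z j))) [0..<n]) 1 = exp R"
        unfolding R_def
      proof (rule foldr_exp)
        fix a b assume "a \<in> set [0..<n]" "b \<in> set [0..<n]"
        thus "lift n D a (Z a) * lift n D b (Z b) = lift n D b (Z b) * lift n D a (Z a)"
          by (cases "a = b") (auto intro: lift_commute)
      qed
      finally show ?thesis .
    qed
    define \<zeta> where "\<zeta> = - \<i> * complex_of_real t * complex_of_real \<sigma>"
    have per_k: "cscale (- \<i> * complex_of_real t) (ap (Tb k) w)
        = cscale (- \<i> * complex_of_real t * complex_of_real (sk k)) w + (\<Sum>j<n. ap (lift n D j (Y k j)) w)"
      if kw: "k < NH" "w \<in> VS T" for k w
    proof (cases "jk k = n")
      case True
      have "ap (lift n D j (Y k j)) w = 0" if "j < n" for j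
        using dl[OF kw(1) that] True that by (simp add: Y_def cI_zero lift_zero)
      hence "(\<Sum>j<n. ap (lift n D j (Y k j)) w) = 0" by simp
      moreover have "ap (Tb k) w = (\<Prod>m<n. lam k m) *\<^sub>R w" using Tb_eq[OF kw] True by simp
      ultimately show ?thesis using True
        by (simp add: sk_def cscale_of_real[symmetric] cscale_cscale)
    next
      case False
      hence jn: "jk k < n" using jkle[of k] by simp
      have "(\<Sum>j<n. ap (lift n D j (Y k j)) w) = (\<Sum>j<n. if j = jk k then ap (lift n D (jk k) (Y k (jk k))) w else 0)"
        by (rule sum.cong) (auto simp: dl[OF kw(1)] Y_def cI_zero lift_zero)
      also have "\<dots> = ap (lift n D (jk k) (Y k (jk k))) w" using jn by simp
      finally have s: "(\<Sum>j<n. ap (lift n D j (Y k j)) w) = ap (lift n D (jk k) (Y k (jk k))) w" .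
      have "ap (Tb k) w = delta n D (A k) (jk k) *\<^sub>R ap (lift n D (jk k) (Ab k (jk k))) w"
        using Tb_eq[OF kw] jn dl2[OF jn] by simp
      thus ?thesis using False s
        by (simp add: sk_def Y_def lift_cI ap_mult ap_cI cscale_of_real[symmetric] cscale_cscale)
    qed
    have XR: "ap Xb w = ap (cI \<zeta> + R) w" if w: "w \<in> VS T" for w
    proof -
      have "ap Xb w = (\<Sum>k<NH. cscale (- \<i> * complex_of_real t) (ap (Tb k) w))"
        by (simp add: Xb_def ap_mult ap_cI ap_sum_op cscale_sum_right)
      also have "\<dots> = (\<Sum>k<NH. cscale (- \<i> * complex_of_real t * complex_of_real (sk k)) w + (\<Sum>j<n. ap (lift n D j (Y k j)) w))"
        by (rule sum.cong[OF refl], rule per_k[OF _ w]) simp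
      also have "\<dots> = (\<Sum>k<NH. cscale (- \<i> * complex_of_real t * complex_of_real (sk k)) w) + (\<Sum>k<NH. \<Sum>j<n. ap (lift n D j (Y k j)) w)"
        by (rule sum.distrib)
      also have "(\<Sum>k<NH. cscale (- \<i> * complex_of_real t * complex_of_real (sk k)) w) = cscale \<zeta> w"
        by (simp add: \<zeta>_def \<sigma>_def cscale_sum_left sum_distrib_left)
      also have "(\<Sum>k<NH. \<Sum>j<n. ap (lift n D j (Y k j)) w) = (\<Sum>j<n. \<Sum>k<NH. ap (lift n D j (Y k j)) w)"
        by (rule sum.swap)
      also have "\<dots> = ap R w"
        by (simp add: R_def Z_def sum_list_map_upt lift_sum ap_sum_op)
      finally show ?thesis by (simp add: ap_plus_op ap_cI)
    qed
    have pX: "pres T Xb" unfolding Xb_def Tb_def T_def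
      by (intro pres_mult pres_cI pres_sum pres_foldr pres_lift)
    have "ap (exp Xb) v = ap (exp (cI \<zeta> + R)) v" by (rule exp_cong_VS[OF pX XR v])
    also have "exp (cI \<zeta> + R) = exp (cI \<zeta>) * exp R" by (rule exp_add_commuting[OF cI_commute])
    also have "ap (exp (cI \<zeta>) * exp R) v = cscale (exp \<zeta>) (ap (exp R) v)" by (simp add: ap_mult exp_cI)
    also have "ap (exp R) v = ap Ut v" using Ut_R[OF v] by simp
    finally show ?thesis by (simp add: c_def \<zeta>_def)
  qed

  show ?thesis
  proof (intro exI conjI ballI)
    show "cmod c = 1" by (rule cm)
    fix \<psi> assume psi: "\<psi> \<in> l2 (tuples n D)"
    have "op_exp (\<lambda>\<phi> x. - \<i> * complex_of_real t * (\<Sum>i<NH. tensor_op n D (A i) \<phi> x)) \<psi>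
          = vf (ap (exp Xb) (Abs_ell2 \<psi>))"
      using repr_exp[OF reprX] psi by (simp add: repr_def T_def)
    also have "\<dots> = vf (cscale c (ap Ut (Abs_ell2 \<psi>)))" using key[OF Abs_l2_VS] psi by (simp add: T_def)
    also have "\<dots> = (\<lambda>x. c * tensor_op n D (U_factor n D t NH A) \<psi> x)"
      using reprUt psi by (simp add: repr_def T_def vf_cscale)
    finally show "op_exp (\<lambda>\<phi> x. - \<i> * complex_of_real t * (\<Sum>i<NH. tensor_op n D (A i) \<phi> x)) \<psi>
          = (\<lambda>x. c * tensor_op n D (U_factor n D t NH A) \<psi> x)" .
  qed
qed

end
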